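(* Let $\Lambda$ be a block of bounded weights. The map $a\lambda b\mapsto\mathrm{cl}(a\lambda b)$ is a degree-preserving bijection between the set of oriented circle diagrams with underlying weight in $\Lambda$ and the set of closed oriented circle diagrams with underlying weight in $\mathrm{cl}(\Lambda)$.
   Context: A number line carries vertices indexed by consecutive integers. A weight labels each vertex by $\circ,\times,\vee,\wedge$; bounded if finitely many vertices. A block is an equivalence class of weights under permuting $\vee$'s and $\wedge$'s. Cup diagrams: finitely many non-crossing cups joining pairs of vertices and rays down to infinity; cap diagrams similarly upward; $c^*$ mirror image. $c\lambda$ is an oriented cup diagram if free vertices are $\circ/\times$, cups have one $\vee$ and one $\wedge$ end, ray vertices are $\vee/\wedge$, and no two rays are labelled $\vee,\wedge$ in that order left to right; $\lambda c$ (cap diagram) oriented iff $c^*\lambda$ is. Degree: number of clockwise cups/caps (left end $\wedge$). Oriented circle diagram $a\lambda b$: $a\lambda$ and $\lambda b$ oriented; $\deg(a\lambda b)=\deg(a\lambda)+\deg(\lambda b)$; closed if no rays. $\underline\lambda$: unique cup diagram with $\underline\lambda\lambda$ oriented of degree $0$; $\overline\lambda=(\underline\lambda)^*$. If $a\lambda b$ is oriented with $\lambda\in\Lambda$, then $a=\underline\alpha$, $b=\overline\beta$ for unique $\alpha,\beta\in\Lambda$. Closure: if weights in $\Lambda$ have $p$ labels $\wedge$ and $q$ labels $\vee$, $\mathrm{cl}(\lambda)$ adds $p$ vertices labelled $\vee$ at the left end and $q$ labelled $\wedge$ at the right end; for $\alpha,\beta\in\Lambda$, $\mathrm{cl}(\underline\alpha):=\underline{\mathrm{cl}(\alpha)}$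 and $\mathrm{cl}(\overline\beta):=\overline{\mathrm{cl}(\beta)}$; and $\mathrm{cl}(a\lambda b):=\mathrm{cl}(a)\mathrm{cl}(\lambda)\mathrm{cl}(b)$. *)

theory Defs
  imports "HOL-Combinatorics.Permutations"
begin

text \<open>Labels: Circ = o, Cross = x, Vee = down-label, Wedge = up-label.\<close>
datatype label = Circ | Cross | Vee | Wedge

text \<open>A bounded weight on consecutive vertices, vertex k of the list being the
  k-th vertex from the left (positions 0 ..< length).\<close>
type_synonym weight = "label list"

definition is_block :: "weight set \<Rightarrow> bool" where
  "is_block \<Lambda> \<longleftrightarrow> (\<exists>w0. \<Lambda> = {\<mu>. \<exists>\<sigma>. \<sigma> permutes {..<length w0}
       \<and> (\<forall>i<length w0. w0 ! i \<in> {Circ, Cross} \<longrightarrow> \<sigma> i = i)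
       \<and> \<mu> = map (\<lambda>i. w0 ! \<sigma> i) [0..<length w0]})"

text \<open>A (cup) diagram: a set of cups (i,j) with i<j and a set of ray vertices.
  A cap diagram c is encoded by the data of its mirror image c* (a cup diagram).\<close>
type_synonym diag = "(nat \<times> nat) set \<times> nat set"

definition wf_diag :: "nat \<Rightarrow> diag \<Rightarrow> bool" where
  "wf_diag n c \<longleftrightarrow> (let C = fst c; R = snd c in
     (\<forall>(i,j)\<in>C. i < j \<and> j < n) \<and> (\<forall>r\<in>R. r < n)
     \<and> (\<forall>(i,j)\<in>C. \<forall>(k,l)\<in>C. (i,j) \<noteq> (k,l) \<longrightarrow> {i,j} \<inter> {k,l} = {})
     \<and> (\<forall>(i,j)\<in>C. i \<notin> R \<and> j \<notin> R)
     \<and> (\<forall>(i,j)\<in>C. \<forall>(k,l)\<in>C. \<not> (i < k \<and> k < j \<and> j < l))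
     \<and> (\<forall>(i,j)\<in>C. \<forall>r\<in>R. \<not> (i < r \<and> r < j)))"

definition free_vertex :: "diag \<Rightarrow> nat \<Rightarrow> bool" where
  "free_vertex c v \<longleftrightarrow> v \<notin> snd c \<and> (\<forall>(i,j)\<in>fst c. v \<noteq> i \<and> v \<noteq> j)"

text \<open>cw is an oriented cup diagram (for a cap diagram b encoded by b*, this is
  the condition that wb is oriented).\<close>
definition oriented :: "diag \<Rightarrow> weight \<Rightarrow> bool" where
  "oriented c w \<longleftrightarrow> wf_diag (length w) c
     \<and> (\<forall>v<length w. free_vertex c v \<longrightarrow> w ! v \<in> {Circ, Cross})
     \<and> (\<forall>(i,j)\<in>fst c. {w ! i, w ! j} = {Vee, Wedge})
     \<and> (\<forall>r\<in>snd c. w ! r \<in> {Vee, Wedge})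
     \<and> (\<forall>r\<in>snd c. \<forall>s\<in>snd c. r < s \<longrightarrow> \<not> (w ! r = Vee \<and> w ! s = Wedge))"

text \<open>Degree: number of clockwise cups (left end labelled Wedge).\<close>
definition deg :: "diag \<Rightarrow> weight \<Rightarrow> nat" where
  "deg c w = card {(i,j)\<in>fst c. w ! i = Wedge}"

type_synonym circ = "diag \<times> weight \<times> diag"

definition oriented_circ :: "circ \<Rightarrow> bool" where
  "oriented_circ x \<longleftrightarrow> (case x of (a, w, b) \<Rightarrow> oriented a w \<and> oriented b w)"

definition deg_circ :: "circ \<Rightarrow> nat" where
  "deg_circ x = (case x of (a, w, b) \<Rightarrow> deg a w + deg b w)"

definition closed_circ :: "circ \<Rightarrow> bool" where
  "closed_circ x \<longleftrightarrow> (case x of (a, w, b) \<Rightarrow> snd a = {} \<and> snd b = {})"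

definition circ_diagrams :: "weight set \<Rightarrow> circ set" where
  "circ_diagrams \<Lambda> = {x. oriented_circ x \<and> fst (snd x) \<in> \<Lambda>}"

definition closed_circ_diagrams :: "weight set \<Rightarrow> circ set" where
  "closed_circ_diagrams \<Lambda> = {x. oriented_circ x \<and> closed_circ x \<and> fst (snd x) \<in> \<Lambda>}"

text \<open>underline w: the unique cup diagram with underline w w oriented of degree 0;
  overline w = (underline w)*, which in our encoding of cap diagrams has the same data.\<close>
definition cup_under :: "weight \<Rightarrow> diag" where
  "cup_under w = (THE c. oriented c w \<and> deg c w = 0)"

definition cap_over :: "weight \<Rightarrow> diag" where
  "cap_over w = cup_under w"

text \<open>Closure of a weight: prepend p Vee's and append q Wedge's, where p, q are the
  numbers of Wedge and Vee labels (constant on a block).\<close>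
definition clw :: "weight \<Rightarrow> weight" where
  "clw w = replicate (count_list w Wedge) Vee @ w @ replicate (count_list w Vee) Wedge"

definition cl_cup :: "weight set \<Rightarrow> diag \<Rightarrow> diag" where
  "cl_cup \<Lambda> a = cup_under (clw (THE \<alpha>. \<alpha> \<in> \<Lambda> \<and> cup_under \<alpha> = a))"

definition cl_cap :: "weight set \<Rightarrow> diag \<Rightarrow> diag" where
  "cl_cap \<Lambda> b = cap_over (clw (THE \<beta>. \<beta> \<in> \<Lambda> \<and> cap_over \<beta> = b))"

definition cl_circ :: "weight set \<Rightarrow> circ \<Rightarrow> circ" where
  "cl_circ \<Lambda> x = (case x of (a, w, b) \<Rightarrow> (cl_cup \<Lambda> a, clw w, cl_cap \<Lambda> b))"

end

theory Submission
  imports Defs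
begin


definition D0 :: "diag \<Rightarrow> weight \<Rightarrow> bool" where
  "D0 c w \<longleftrightarrow> oriented c w \<and> (\<forall>(i,j)\<in>fst c. w ! i = Vee \<and> w ! j = Wedge)"

lemma two_eq: "{a, b} = {Vee, Wedge} \<longleftrightarrow> (a = Vee \<and> b = Wedge) \<or> (a = Wedge \<and> b = Vee)"
  by (auto simp: doubleton_eq_iff)

lemma oriented_finite:
  assumes "oriented c w" shows "finite (fst c)" "finite (snd c)"
proof -
  have "fst c \<subseteq> {..<length w} \<times> {..<length w}" "snd c \<subseteq> {..<length w}"
    using assms unfolding oriented_def wf_diag_def Let_def by fastforce+
  then show "finite (fst c)" "finite (snd c)" by (auto intro: finite_subset)
qed

lemma deg0_iff:
  assumes "oriented c w" shows "deg c w = 0 \<longleftrightarrow> D0 c w"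
proof -
  have f: "finite {(i,j)\<in>fst c. w ! i = Wedge}"
    using oriented_finite[OF assms] by (auto intro: finite_subset)
  have lab: "\<And>i j. (i,j) \<in> fst c \<Longrightarrow> {w ! i, w ! j} = {Vee, Wedge}"
    using assms unfolding oriented_def by blast
  have "(\<forall>(i,j)\<in>fst c. w ! i \<noteq> Wedge) \<longleftrightarrow> (\<forall>(i,j)\<in>fst c. w ! i = Vee \<and> w ! j = Wedge)"
  proof
    assume A: "\<forall>(i,j)\<in>fst c. w ! i \<noteq> Wedge"
    show "\<forall>(i,j)\<in>fst c. w ! i = Vee \<and> w ! j = Wedge"
    proof (clarify)
      fix i j assume "(i,j) \<in> fst c"
      then show "w ! i = Vee \<and> w ! j = Wedge" using A lab[of i j] unfolding two_eq by blast
    qed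
  qed auto
  moreover have "deg c w = 0 \<longleftrightarrow> (\<forall>(i,j)\<in>fst c. w ! i \<noteq> Wedge)"
    unfolding deg_def using f by (auto simp: card_eq_0_iff)
  ultimately show ?thesis using assms unfolding D0_def by simp
qed

lemma nonfree:
  assumes "oriented c w" "v < length w" "w ! v = Vee \<or> w ! v = Wedge"
  shows "v \<in> snd c \<or> (\<exists>j. (v,j) \<in> fst c) \<or> (\<exists>i. (i,v) \<in> fst c)"
  using assms unfolding oriented_def free_vertex_def by fastforce

definition adjpair :: "weight \<Rightarrow> nat \<Rightarrow> nat \<Rightarrow> bool" where
  "adjpair w i j \<longleftrightarrow> i < j \<and> j < length w \<and> w ! i = Vee \<and> w ! j = Wedge
     \<and> (\<forall>v. i < v \<and> v < j \<longrightarrow> w ! v = Circ \<or> w ! v = Cross)"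

lemma label_cases: "x = Circ \<or> x = Cross \<or> x = Vee \<or> x = Wedge"
  by (cases x) auto

lemma exists_adj:
  assumes "i < k" "k < length w" "w ! i = Vee" "w ! k = Wedge"
  shows "\<exists>i j. adjpair w i j"
proof -
  define P where "P j \<longleftrightarrow> i < j \<and> j < length w \<and> w ! j = Wedge" for j
  have Pk: "P k" using assms by (simp add: P_def)
  define j where "j = (LEAST j. P j)"
  have Pj: "P j" unfolding j_def by (rule LeastI[of P k, OF Pk])
  have jmin: "\<And>v. P v \<Longrightarrow> j \<le> v" unfolding j_def by (rule Least_le)
  define Q where "Q i' \<longleftrightarrow> i' < j \<and> w ! i' = Vee" for i'
  have Qi: "Q i" using Pj assms by (simp add: P_def Q_def)
  define i' where "i' = (GREATEST i'. Q i')"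
  have Qi': "Q i'" unfolding i'_def by (rule GreatestI_nat[of Q i j]) (use Qi in \<open>auto simp: Q_def\<close>)
  have imax: "\<And>v. Q v \<Longrightarrow> v \<le> i'" unfolding i'_def by (rule Greatest_le_nat[of Q _ j]) (auto simp: Q_def)
  have ii': "i \<le> i'" using imax Qi by blast
  have "adjpair w i' j"
    unfolding adjpair_def
  proof (intro conjI allI impI)
    show "i' < j" "w ! i' = Vee" using Qi' by (auto simp: Q_def)
    show "j < length w" "w ! j = Wedge" using Pj by (auto simp: P_def)
    fix v assume v: "i' < v \<and> v < j"
    have "w ! v \<noteq> Vee" using imax[of v] v by (auto simp: Q_def)
    moreover have "w ! v \<noteq> Wedge" using jmin[of v] v ii' Pj by (auto simp: P_def)
    ultimately show "w ! v = Circ \<or> w ! v = Cross" using label_cases[of "w ! v"] by auto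
  qed
  then show ?thesis by blast
qed

lemma wfD:
  assumes "wf_diag n c"
  shows "\<And>i j. (i,j) \<in> fst c \<Longrightarrow> i < j \<and> j < n"
    and "\<And>r. r \<in> snd c \<Longrightarrow> r < n"
    and "\<And>i j k l. (i,j) \<in> fst c \<Longrightarrow> (k,l) \<in> fst c \<Longrightarrow> (i,j) \<noteq> (k,l) \<Longrightarrow> {i,j} \<inter> {k,l} = {}"
    and "\<And>i j. (i,j) \<in> fst c \<Longrightarrow> i \<notin> snd c \<and> j \<notin> snd c"
    and "\<And>i j k l. (i,j) \<in> fst c \<Longrightarrow> (k,l) \<in> fst c \<Longrightarrow> \<not> (i < k \<and> k < j \<and> j < l)"
    and "\<And>i j r. (i,j) \<in> fst c \<Longrightarrow> r \<in> snd c \<Longrightarrow> \<not> (i < r \<and> r < j)"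
proof -
  note B = assms[unfolded wf_diag_def Let_def]
  have A1: "(\<forall>(i,j)\<in>fst c. i < j \<and> j < n)" using B by (rule conjunct1)
  have A2: "(\<forall>r\<in>snd c. r < n)" using B by (elim conjE)
  have A3: "(\<forall>(i,j)\<in>fst c. \<forall>(k,l)\<in>fst c. (i,j) \<noteq> (k,l) \<longrightarrow> {i,j} \<inter> {k,l} = {})"  using B by (elim conjE)
  have A4: "(\<forall>(i,j)\<in>fst c. i \<notin> snd c \<and> j \<notin> snd c)" using B by (elim conjE)
  have A5: "(\<forall>(i,j)\<in>fst c. \<forall>(k,l)\<in>fst c. \<not> (i < k \<and> k < j \<and> j < l))" using B by (elim conjE)
  have A6: "(\<forall>(i,j)\<in>fst c. \<forall>r\<in>snd c. \<not> (i < r \<and> r < j))" using B by (elim conjE)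
  note A = A1 A2 A3 A4 A5 A6
  show "\<And>i j. (i,j) \<in> fst c \<Longrightarrow> i < j \<and> j < n" using A(1) by fast
  show "\<And>r. r \<in> snd c \<Longrightarrow> r < n" using A(2) by fast
  show "\<And>i j k l. (i,j) \<in> fst c \<Longrightarrow> (k,l) \<in> fst c \<Longrightarrow> (i,j) \<noteq> (k,l) \<Longrightarrow> {i,j} \<inter> {k,l} = {}"
    using A(3) by fast
  show "\<And>i j. (i,j) \<in> fst c \<Longrightarrow> i \<notin> snd c \<and> j \<notin> snd c" using A(4) by fast
  show "\<And>i j k l. (i,j) \<in> fst c \<Longrightarrow> (k,l) \<in> fst c \<Longrightarrow> \<not> (i < k \<and> k < j \<and> j < l)"
    using A(5) by fast
  show "\<And>i j r. (i,j) \<in> fst c \<Longrightarrow> r \<in> snd c \<Longrightarrow> \<not> (i < r \<and> r < j)" using A(6) by fast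
qed

lemma orD:
  assumes "oriented c w"
  shows "wf_diag (length w) c"
    and "\<And>v. v < length w \<Longrightarrow> free_vertex c v \<Longrightarrow> w ! v = Circ \<or> w ! v = Cross"
    and "\<And>i j. (i,j) \<in> fst c \<Longrightarrow> (w ! i = Vee \<and> w ! j = Wedge) \<or> (w ! i = Wedge \<and> w ! j = Vee)"
    and "\<And>r. r \<in> snd c \<Longrightarrow> w ! r = Vee \<or> w ! r = Wedge"
    and "\<And>r s. r \<in> snd c \<Longrightarrow> s \<in> snd c \<Longrightarrow> r < s \<Longrightarrow> \<not> (w ! r = Vee \<and> w ! s = Wedge)"
proof -
  note A = assms[unfolded oriented_def]
  show "wf_diag (length w) c" using A by blast
  show "\<And>v. v < length w \<Longrightarrow> free_vertex c v \<Longrightarrow> w ! v = Circ \<or> w ! v = Cross" using A by blast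
  show "\<And>i j. (i,j) \<in> fst c \<Longrightarrow> (w ! i = Vee \<and> w ! j = Wedge) \<or> (w ! i = Wedge \<and> w ! j = Vee)"
    using A unfolding two_eq[symmetric] by blast
  show "\<And>r. r \<in> snd c \<Longrightarrow> w ! r = Vee \<or> w ! r = Wedge" using A by blast
  show "\<And>r s. r \<in> snd c \<Longrightarrow> s \<in> snd c \<Longrightarrow> r < s \<Longrightarrow> \<not> (w ! r = Vee \<and> w ! s = Wedge)" using A by blast
qed



lemma wfI:
  assumes "\<And>i j. (i,j) \<in> fst c \<Longrightarrow> i < j \<and> j < n"
    and "\<And>r. r \<in> snd c \<Longrightarrow> r < n"
    and "\<And>i j k l. (i,j) \<in> fst c \<Longrightarrow> (k,l) \<in> fst c \<Longrightarrow> (i,j) \<noteq> (k,l) \<Longrightarrow> {i,j} \<inter> {k,l} = {}"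
    and "\<And>i j. (i,j) \<in> fst c \<Longrightarrow> i \<notin> snd c \<and> j \<notin> snd c"
    and "\<And>i j k l. (i,j) \<in> fst c \<Longrightarrow> (k,l) \<in> fst c \<Longrightarrow> \<not> (i < k \<and> k < j \<and> j < l)"
    and "\<And>i j r. (i,j) \<in> fst c \<Longrightarrow> r \<in> snd c \<Longrightarrow> \<not> (i < r \<and> r < j)"
  shows "wf_diag n c"
  unfolding wf_diag_def Let_def
  apply (intro conjI)
  using assms(1) apply fast
  using assms(2) apply fast
  using assms(3) apply fast
  using assms(4) apply fast
  using assms(5) apply fast
  using assms(6) apply fast
  done

lemma orI:
  assumes "wf_diag (length w) c"
    and "\<And>v. v < length w \<Longrightarrow> free_vertex c v \<Longrightarrow> w ! v = Circ \<or> w ! v = Cross"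
    and "\<And>i j. (i,j) \<in> fst c \<Longrightarrow> (w ! i = Vee \<and> w ! j = Wedge) \<or> (w ! i = Wedge \<and> w ! j = Vee)"
    and "\<And>r. r \<in> snd c \<Longrightarrow> w ! r = Vee \<or> w ! r = Wedge"
    and "\<And>r s. r \<in> snd c \<Longrightarrow> s \<in> snd c \<Longrightarrow> r < s \<Longrightarrow> \<not> (w ! r = Vee \<and> w ! s = Wedge)"
  shows "oriented c w"
  unfolding oriented_def
  apply (intro conjI)
  using assms(1) apply fast
  using assms(2) apply fast
  using assms(3) unfolding two_eq apply fast
  using assms(4) apply fast
  using assms(5) apply fast
  done



lemma pair_in:
  assumes D: "D0 c w" and P: "adjpair w i j" shows "(i,j) \<in> fst c"
proof -
  have O: "oriented c w" and lab: "\<And>x y. (x,y) \<in> fst c \<Longrightarrow> w ! x = Vee \<and> w ! y = Wedge"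
    using D unfolding D0_def by auto
  note W = wfD[OF orD(1)[OF O]]
  have ij: "i < j" "j < length w" "w ! i = Vee" "w ! j = Wedge"
    and btw: "\<And>v. i < v \<Longrightarrow> v < j \<Longrightarrow> w ! v = Circ \<or> w ! v = Cross"
    using P unfolding adjpair_def by auto
  have nj: "j \<in> snd c \<or> (\<exists>l. (j,l) \<in> fst c) \<or> (\<exists>i'. (i',j) \<in> fst c)"
    using nonfree[OF O ij(2)] ij(4) by blast
  have ni: "i \<in> snd c \<or> (\<exists>l. (i,l) \<in> fst c) \<or> (\<exists>i'. (i',i) \<in> fst c)"
    using nonfree[OF O, of i] ij by simp
  have noj: "\<not> (\<exists>l. (j,l) \<in> fst c)" using lab ij(4) by force
  have noi: "\<not> (\<exists>x. (x,i) \<in> fst c)" using lab ij(3) by force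
  have "i \<notin> snd c"
  proof
    assume ir: "i \<in> snd c"
    show False
    proof (cases "j \<in> snd c")
      case True then show False using orD(5)[OF O ir True ij(1)] ij by simp
    next
      case False
      then obtain i' where c: "(i',j) \<in> fst c" using nj noj by blast
      have "i' < j" using W(1)[OF c] by simp
      moreover have "i' \<noteq> i" using W(4)[OF c] ir by blast
      moreover have "\<not> (i' < i)" using W(6)[OF c ir] ij(1) by blast
      moreover have "\<not> (i < i' \<and> i' < j)" using btw[of i'] lab[OF c] by auto
      ultimately show False by linarith
    qed
  qed
  then obtain k where ik: "(i,k) \<in> fst c" using ni noi by blast
  have "k = j"
  proof (rule ccontr)
    assume kj: "k \<noteq> j"
    have "i < k" using W(1)[OF ik] by simp
    moreover have "\<not> (k < j)" using btw[of k] lab[OF ik] \<open>i < k\<close> by auto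
    ultimately have jk: "j < k" using kj by linarith
    show False
    proof (cases "j \<in> snd c")
      case True then show False using W(6)[OF ik True] ij(1) jk by blast
    next
      case False
      then obtain i' where c: "(i',j) \<in> fst c" using nj noj by blast
      have "i' < j" using W(1)[OF c] by simp
      moreover have "i' \<noteq> i" using W(3)[OF c ik] kj by auto
      moreover have "\<not> (i' < i)" using W(5)[OF c ik] ij(1) jk by blast
      moreover have "\<not> (i < i' \<and> i' < j)" using btw[of i'] lab[OF c] by auto
      ultimately show False by linarith
    qed
  qed
  then show ?thesis using ik by simp
qed


definition N :: "weight \<Rightarrow> nat" where
  "N w = card {v. v < length w \<and> (w ! v = Vee \<or> w ! v = Wedge)}"

lemma free_iff: "free_vertex c v \<longleftrightarrow> v \<notin> snd c \<and> (\<forall>x. (v,x) \<notin> fst c) \<and> (\<forall>x. (x,v) \<notin> fst c)"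
  unfolding free_vertex_def by fastforce

lemma N_upd:
  assumes "adjpair w i j"
  shows "N (w[i:=Circ, j:=Circ]) < N w"
proof -
  let ?S = "{v. v < length w \<and> (w ! v = Vee \<or> w ! v = Wedge)}"
  have ij: "i < j" "j < length w" "w ! i = Vee" using assms unfolding adjpair_def by auto
  have "{v. v < length (w[i:=Circ, j:=Circ]) \<and> (w[i:=Circ, j:=Circ] ! v = Vee \<or> w[i:=Circ, j:=Circ] ! v = Wedge)} \<subseteq> ?S - {i}"
    using ij by (auto simp: nth_list_update)
  moreover have "card (?S - {i}) < card ?S"
    using ij by (intro card_Diff1_less) auto
  moreover have "finite ?S" by simp
  ultimately show ?thesis unfolding N_def
    by (meson card_mono finite_Diff le_less_trans)
qed

lemma rem:
  assumes D: "D0 c w" and ic: "(i,j) \<in> fst c"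
  shows "D0 (fst c - {(i,j)}, snd c) (w[i:=Circ, j:=Circ])"
proof -
  let ?w = "w[i:=Circ, j:=Circ]" and ?c = "(fst c - {(i,j)}, snd c)"
  have O: "oriented c w" and lab: "\<And>x y. (x,y) \<in> fst c \<Longrightarrow> w ! x = Vee \<and> w ! y = Wedge"
    using D unfolding D0_def by auto
  note W = wfD[OF orD(1)[OF O]]
  have same: "\<And>v. v \<noteq> i \<Longrightarrow> v \<noteq> j \<Longrightarrow> ?w ! v = w ! v" by simp
  have oth: "\<And>x y. (x,y) \<in> fst ?c \<Longrightarrow> x \<noteq> i \<and> x \<noteq> j \<and> y \<noteq> i \<and> y \<noteq> j"
  proof -
    fix x y assume "(x,y) \<in> fst ?c"
    then have "(x,y) \<in> fst c" "(x,y) \<noteq> (i,j)" by auto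
    then show "x \<noteq> i \<and> x \<noteq> j \<and> y \<noteq> i \<and> y \<noteq> j" using W(3)[OF ic, of x y] by auto
  qed
  have rr: "\<And>r. r \<in> snd c \<Longrightarrow> r \<noteq> i \<and> r \<noteq> j" using W(4)[OF ic] by auto
  have "oriented ?c ?w"
  proof (rule orI)
    show "wf_diag (length ?w) ?c"
      apply (rule wfI)
      subgoal for x y using W(1)[of x y] by simp
      subgoal for r using W(2)[of r] by simp
      subgoal for x y k l using W(3)[of x y k l] by simp
      subgoal for x y using W(4)[of x y] by simp
      subgoal for x y k l using W(5)[of x y k l] by simp
      subgoal for x y r using W(6)[of x y r] by simp
      done
    show "?w ! v = Circ \<or> ?w ! v = Cross" if "v < length ?w" "free_vertex ?c v" for v
    proof (cases "v = i \<or> v = j")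
      case True then show ?thesis using W(1)[OF ic] by (auto simp: nth_list_update)
    next
      case False
      then have "free_vertex c v" using that(2) unfolding free_iff by auto
      then show ?thesis using orD(2)[OF O, of v] that(1) False by simp
    qed
    show "(?w ! x = Vee \<and> ?w ! y = Wedge) \<or> (?w ! x = Wedge \<and> ?w ! y = Vee)" if "(x,y) \<in> fst ?c" for x y
      using oth[OF that] lab[of x y] that by simp
    show "?w ! r = Vee \<or> ?w ! r = Wedge" if "r \<in> snd ?c" for r
      using rr[of r] orD(4)[OF O, of r] that by simp
    show "\<not> (?w ! r = Vee \<and> ?w ! s = Wedge)" if "r \<in> snd ?c" "s \<in> snd ?c" "r < s" for r s
      using rr[of r] rr[of s] orD(5)[OF O, of r s] that by simp
  qed
  moreover have "\<forall>(x,y)\<in>fst ?c. ?w ! x = Vee \<and> ?w ! y = Wedge"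
  proof
    fix p assume p: "p \<in> fst ?c"
    obtain x y where xy: "p = (x,y)" by (cases p)
    have "(x,y) \<in> fst c" using p xy by simp
    have "?w ! x = w ! x" "?w ! y = w ! y" using oth[of x y] p xy by auto
    then show "case p of (x,y) \<Rightarrow> ?w ! x = Vee \<and> ?w ! y = Wedge"
      using lab[OF \<open>(x,y) \<in> fst c\<close>] xy by simp
  qed
  ultimately show ?thesis unfolding D0_def by simp
qed

lemma add:
  assumes D: "D0 c (w[i:=Circ, j:=Circ])" and P: "adjpair w i j"
  shows "D0 (insert (i,j) (fst c), snd c) w"
proof -
  let ?w = "w[i:=Circ, j:=Circ]" and ?c = "(insert (i,j) (fst c), snd c)"
  have ij: "i < j" "j < length w" "w ! i = Vee" "w ! j = Wedge"
    and btw: "\<And>v. i < v \<Longrightarrow> v < j \<Longrightarrow> w ! v = Circ \<or> w ! v = Cross"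
    using P unfolding adjpair_def by auto
  have O: "oriented c ?w" and lab: "\<And>x y. (x,y) \<in> fst c \<Longrightarrow> ?w ! x = Vee \<and> ?w ! y = Wedge"
    using D unfolding D0_def by auto
  have len: "length ?w = length w" by simp
  note W = wfD[OF orD(1)[OF O]]
  have cc: "\<And>v. i \<le> v \<Longrightarrow> v \<le> j \<Longrightarrow> ?w ! v = Circ \<or> ?w ! v = Cross"
    using btw ij by (auto simp: nth_list_update)
  have notend: "\<And>x y. (x,y) \<in> fst c \<Longrightarrow> \<not> (i \<le> x \<and> x \<le> j) \<and> \<not> (i \<le> y \<and> y \<le> j)"
  proof -
    fix x y assume "(x,y) \<in> fst c"
    from lab[OF this] show "\<not> (i \<le> x \<and> x \<le> j) \<and> \<not> (i \<le> y \<and> y \<le> j)"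
      using cc[of x] cc[of y] by auto
  qed
  have notray: "\<And>r. r \<in> snd c \<Longrightarrow> \<not> (i \<le> r \<and> r \<le> j)"
    using orD(4)[OF O] cc by fastforce
  have same: "\<And>v. v \<noteq> i \<Longrightarrow> v \<noteq> j \<Longrightarrow> ?w ! v = w ! v" by simp
  have "oriented ?c w"
  proof (rule orI)
    show "wf_diag (length w) ?c"
    proof (rule wfI)
      show "\<And>x y. (x,y) \<in> fst ?c \<Longrightarrow> x < y \<and> y < length w" using W(1) ij len by auto
      show "\<And>r. r \<in> snd ?c \<Longrightarrow> r < length w" using W(2) len by auto
      show "{x,y} \<inter> {k,l} = {}" if "(x,y) \<in> fst ?c" "(k,l) \<in> fst ?c" "(x,y) \<noteq> (k,l)" for x y k l
        using that W(3) notend ij(1) by fastforce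
      show "\<And>x y. (x,y) \<in> fst ?c \<Longrightarrow> x \<notin> snd ?c \<and> y \<notin> snd ?c"
        using W(4) notray ij(1) by fastforce
      show "\<not> (x < k \<and> k < y \<and> y < l)" if "(x,y) \<in> fst ?c" "(k,l) \<in> fst ?c" for x y k l
        using that W(5) notend ij(1) by fastforce
      show "\<not> (x < r \<and> r < y)" if "(x,y) \<in> fst ?c" "r \<in> snd ?c" for x y r
        using that W(6) notray by fastforce
    qed
    show "w ! v = Circ \<or> w ! v = Cross" if "v < length w" "free_vertex ?c v" for v
    proof -
      have "v \<noteq> i" "v \<noteq> j" "free_vertex c v" using that(2) unfolding free_iff by auto
      then show ?thesis using orD(2)[OF O, of v] that(1) by simp
    qed
    show "(w ! x = Vee \<and> w ! y = Wedge) \<or> (w ! x = Wedge \<and> w ! y = Vee)" if "(x,y) \<in> fst ?c" for x y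
    proof (cases "(x,y) = (i,j)")
      case True then show ?thesis using ij by simp
    next
      case False
      then have xy: "(x,y) \<in> fst c" using that by auto
      have "w ! x = ?w ! x" "w ! y = ?w ! y" using notend[OF xy] ij(1) same by auto
      then show ?thesis using lab[OF xy] by simp
    qed
    show "w ! r = Vee \<or> w ! r = Wedge" if "r \<in> snd ?c" for r
      using notray[of r] orD(4)[OF O, of r] that ij(1) by (metis le_refl less_imp_le same snd_conv)
    show "\<not> (w ! r = Vee \<and> w ! s = Wedge)" if "r \<in> snd ?c" "s \<in> snd ?c" "r < s" for r s
      using notray[of r] notray[of s] orD(5)[OF O, of r s] that ij(1) by (metis le_refl less_imp_le same snd_conv)
  qed
  moreover have "\<forall>(x,y)\<in>fst ?c. w ! x = Vee \<and> w ! y = Wedge"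
  proof
    fix p assume p: "p \<in> fst ?c"
    obtain x y where xy: "p = (x,y)" by (cases p)
    show "case p of (x,y) \<Rightarrow> w ! x = Vee \<and> w ! y = Wedge"
    proof (cases "(x,y) = (i,j)")
      case True then show ?thesis using ij xy by simp
    next
      case False
      then have xy': "(x,y) \<in> fst c" using p xy by auto
      have "w ! x = ?w ! x" "w ! y = ?w ! y" using notend[OF xy'] ij(1) same by auto
      then show ?thesis using lab[OF xy'] xy by simp
    qed
  qed
  ultimately show ?thesis unfolding D0_def by simp
qed

lemma no_adj_D0:
  assumes "\<not> (\<exists>i j. adjpair w i j)" "D0 c w"
  shows "c = ({}, {v. v < length w \<and> (w ! v = Vee \<or> w ! v = Wedge)})"
proof -
  have O: "oriented c w" and lab: "\<And>x y. (x,y) \<in> fst c \<Longrightarrow> w ! x = Vee \<and> w ! y = Wedge"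
    using assms unfolding D0_def by auto
  note W = wfD[OF orD(1)[OF O]]
  have nvw: "\<And>x y. x < y \<Longrightarrow> y < length w \<Longrightarrow> \<not> (w ! x = Vee \<and> w ! y = Wedge)"
    using exists_adj assms(1) by blast
  have e: "fst c = {}"
    using lab W(1) nvw by fastforce
  have "snd c = {v. v < length w \<and> (w ! v = Vee \<or> w ! v = Wedge)}"
  proof
    show "snd c \<subseteq> {v. v < length w \<and> (w ! v = Vee \<or> w ! v = Wedge)}" using W(2) orD(4)[OF O] by auto
    show "{v. v < length w \<and> (w ! v = Vee \<or> w ! v = Wedge)} \<subseteq> snd c" using nonfree[OF O] e by auto
  qed
  then show ?thesis using e by (simp add: prod_eq_iff)
qed

lemma no_adj_ex:
  assumes "\<not> (\<exists>i j. adjpair w i j)"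
  shows "D0 ({}, {v. v < length w \<and> (w ! v = Vee \<or> w ! v = Wedge)}) w"
proof -
  have nvw: "\<And>x y. x < y \<Longrightarrow> y < length w \<Longrightarrow> \<not> (w ! x = Vee \<and> w ! y = Wedge)"
    using exists_adj assms(1) by blast
  have "oriented ({}, {v. v < length w \<and> (w ! v = Vee \<or> w ! v = Wedge)}) w"
  proof (rule orI)
    show "wf_diag (length w) ({}, {v. v < length w \<and> (w ! v = Vee \<or> w ! v = Wedge)})"
      by (rule wfI) auto
    show "w ! v = Circ \<or> w ! v = Cross" if "v < length w" "free_vertex ({}, {v. v < length w \<and> (w ! v = Vee \<or> w ! v = Wedge)}) v" for v
      using that label_cases[of "w ! v"] unfolding free_iff by auto
  qed (use nvw in auto)
  then show ?thesis unfolding D0_def by simp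
qed

lemma D0_unique_ex: "\<exists>!c. D0 c w"
proof (induction "N w" arbitrary: w rule: less_induct)
  case less
  show ?case
  proof (cases "\<exists>i j. adjpair w i j")
    case False
    then show ?thesis using no_adj_D0 no_adj_ex by metis
  next
    case True
    then obtain i j where P: "adjpair w i j" by blast
    from less[OF N_upd[OF P]] obtain c' where c': "D0 c' (w[i:=Circ, j:=Circ])"
      and u: "\<And>d. D0 d (w[i:=Circ, j:=Circ]) \<Longrightarrow> d = c'" by blast
    have ex: "D0 (insert (i,j) (fst c'), snd c') w" by (rule add[OF c' P])
    show ?thesis
    proof (rule ex1I[where P="\<lambda>c. D0 c w", OF ex])
      fix d assume d: "D0 d w"
      have ijd: "(i,j) \<in> fst d" by (rule pair_in[OF d P])
      have "(fst d - {(i,j)}, snd d) = c'" by (rule u[OF rem[OF d ijd]])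
      then show "d = (insert (i,j) (fst c'), snd c')"
        using ijd by (auto simp: prod_eq_iff)
    qed
  qed
qed

lemma cup_under_D0: "D0 (cup_under w) w"
proof -
  have ex: "\<exists>!c. oriented c w \<and> deg c w = 0" using D0_unique_ex[of w] deg0_iff[of _ w]
    by (metis D0_def)
  have "oriented (cup_under w) w \<and> deg (cup_under w) w = 0"
    unfolding cup_under_def by (rule theI'[OF ex])
  then show ?thesis using deg0_iff by blast
qed

lemma D0_cup_under: "D0 c w \<Longrightarrow> cup_under w = c"
  using D0_unique_ex[of w] cup_under_D0[of w] by blast


lemma count_card: "count_list w x = card {v. v < length w \<and> w ! v = x}"
  unfolding count_list_eq_length_filter length_filter_conv_card by metis

lemma endpoint_lab:
  assumes O: "oriented c w" and "(x,y) \<in> fst c"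
  shows "w ! x = Vee \<or> w ! x = Wedge" "w ! y = Vee \<or> w ! y = Wedge"
  using orD(3)[OF O assms(2)] by auto

lemma CNT:
  assumes O: "oriented c w" and L: "L = Vee \<or> L = Wedge"
  shows "count_list w L = card (fst c) + card {r\<in>snd c. w ! r = L}"
proof -
  note W = wfD[OF orD(1)[OF O]]
  define f where "f p = (if w ! fst p = L then fst p else snd p)" for p :: "nat \<times> nat"
  define E where "E = f ` fst c"
  have fin: "finite (fst c)" "finite (snd c)" using oriented_finite[OF O] by auto
  have inj: "inj_on f (fst c)"
  proof (rule inj_onI)
    fix p q assume p: "p \<in> fst c" and q: "q \<in> fst c" and e: "f p = f q"
    obtain x y where pxy: "p = (x,y)" by (cases p)
    obtain k l where qkl: "q = (k,l)" by (cases q)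
    show "p = q"
    proof (rule ccontr)
      assume "p \<noteq> q"
      then have "{x,y} \<inter> {k,l} = {}" using W(3)[of x y k l] p q pxy qkl by simp
      moreover have "f p \<in> {x,y}" "f q \<in> {k,l}" using pxy qkl by (auto simp: f_def)
      ultimately show False using e by auto
    qed
  qed
  have cE: "card E = card (fst c)" unfolding E_def by (rule card_image[OF inj])
  have fL: "\<And>p. p \<in> fst c \<Longrightarrow> w ! f p = L"
  proof -
    fix p assume p: "p \<in> fst c"
    obtain x y where pxy: "p = (x,y)" by (cases p)
    show "w ! f p = L" using orD(3)[OF O, of x y] p pxy L by (auto simp: f_def)
  qed
  have eq: "{v. v < length w \<and> w ! v = L} = E \<union> {r\<in>snd c. w ! r = L}"
  proof (intro equalityI subsetI)
    fix v assume v: "v \<in> {v. v < length w \<and> w ! v = L}"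
    then have "v < length w" "w ! v = Vee \<or> w ! v = Wedge" using L by auto
    from nonfree[OF O this] consider "v \<in> snd c" | x where "(v,x) \<in> fst c" | x where "(x,v) \<in> fst c"
      by blast
    then show "v \<in> E \<union> {r\<in>snd c. w ! r = L}"
    proof cases
      case 1 then show ?thesis using v by auto
    next
      case (2 x)
      have "f (v,x) = v" using v by (simp add: f_def)
      then show ?thesis using 2 unfolding E_def by (metis UnI1 image_eqI)
    next
      case (3 x)
      have "w ! x \<noteq> L" using orD(3)[OF O 3] v by auto
      then have "f (x,v) = v" by (simp add: f_def)
      then show ?thesis using 3 unfolding E_def by (metis UnI1 image_eqI)
    qed
  next
    fix v assume v: "v \<in> E \<union> {r\<in>snd c. w ! r = L}"
    then show "v \<in> {v. v < length w \<and> w ! v = L}"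
    proof
      assume "v \<in> E"
      then obtain p where p: "p \<in> fst c" "v = f p" unfolding E_def by blast
      obtain x y where pxy: "p = (x,y)" by (cases p)
      have "v < length w" using W(1)[of x y] p pxy by (auto simp: f_def)
      then show ?thesis using fL[OF p(1)] p(2) by simp
    next
      assume "v \<in> {r\<in>snd c. w ! r = L}"
      then show ?thesis using W(2) by auto
    qed
  qed
  have disj: "E \<inter> {r\<in>snd c. w ! r = L} = {}"
  proof -
    have "\<And>p. p \<in> fst c \<Longrightarrow> f p \<notin> snd c"
    proof -
      fix p assume p: "p \<in> fst c"
      obtain x y where pxy: "p = (x,y)" by (cases p)
      show "f p \<notin> snd c" using W(4)[of x y] p pxy by (auto simp: f_def)
    qed
    then show ?thesis unfolding E_def by auto
  qed
  have "finite E" unfolding E_def using fin by simp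
  then show ?thesis unfolding count_card eq using card_Un_disjoint[OF _ _ disj] fin cE by simp
qed

lemma RAYS_aux:
  assumes O1: "oriented c w1" and O2: "oriented c w2"
    and C: "count_list w1 Wedge = count_list w2 Wedge"
    and r: "r \<in> snd c" "w1 ! r = Wedge" "w2 ! r = Vee"
  shows False
proof -
  let ?S1 = "{s\<in>snd c. w1 ! s = Wedge}" and ?S2 = "{s\<in>snd c. w2 ! s = Wedge}"
  have fin: "finite (snd c)" using oriented_finite[OF O1] by auto
  have "card ?S1 = card ?S2" using CNT[OF O1, of Wedge] CNT[OF O2, of Wedge] C by simp
  moreover have sub2: "?S2 \<subseteq> {s\<in>snd c. s < r}"
  proof
    fix s assume s: "s \<in> ?S2"
    have "\<not> r < s" using orD(5)[OF O2 r(1), of s] s r by auto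
    moreover have "s \<noteq> r" using s r by auto
    ultimately show "s \<in> {s\<in>snd c. s < r}" using s by auto
  qed
  moreover have sub1: "insert r {s\<in>snd c. s < r} \<subseteq> ?S1"
  proof
    fix s assume s: "s \<in> insert r {s\<in>snd c. s < r}"
    show "s \<in> ?S1"
    proof (cases "s = r")
      case True then show ?thesis using r by simp
    next
      case False
      then have s': "s \<in> snd c" "s < r" using s by auto
      then have "w1 ! s \<noteq> Vee" using orD(5)[OF O1 s'(1) r(1) s'(2)] r by auto
      then show ?thesis using orD(4)[OF O1 s'(1)] s' by auto
    qed
  qed
  have ci: "card (insert r {s\<in>snd c. s < r}) = Suc (card {s\<in>snd c. s < r})"
    using fin by (intro card_insert_disjoint) auto
  have f1: "finite ?S1" and f2: "finite {s\<in>snd c. s < r}" using fin by auto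
  have "card ?S2 \<le> card {s\<in>snd c. s < r}" by (rule card_mono[OF f2 sub2])
  moreover have "card (insert r {s\<in>snd c. s < r}) \<le> card ?S1" by (rule card_mono[OF f1 sub1])
  ultimately show False using \<open>card ?S1 = card ?S2\<close> ci by linarith
qed

lemma RAYS:
  assumes O1: "oriented c w1" and O2: "oriented c w2"
    and C: "count_list w1 Wedge = count_list w2 Wedge" and r: "r \<in> snd c"
  shows "w1 ! r = w2 ! r"
proof -
  have "w1 ! r = Vee \<or> w1 ! r = Wedge" "w2 ! r = Vee \<or> w2 ! r = Wedge"
    using orD(4)[OF O1 r] orD(4)[OF O2 r] by auto
  moreover have "\<not> (w1 ! r = Wedge \<and> w2 ! r = Vee)" using RAYS_aux[OF O1 O2 C r] by blast
  moreover have "\<not> (w2 ! r = Wedge \<and> w1 ! r = Vee)" using RAYS_aux[OF O2 O1 C[symmetric] r] by blast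
  ultimately show ?thesis by auto
qed

lemma endpoint_def2: "\<not> free_vertex c v \<Longrightarrow> v \<notin> snd c \<Longrightarrow> (\<exists>x. (v,x) \<in> fst c) \<or> (\<exists>x. (x,v) \<in> fst c)"
  unfolding free_iff by auto

lemma relabel:
  assumes O: "oriented c w" and len: "length w' = length w"
    and same: "\<And>v. v < length w \<Longrightarrow> (\<forall>x. (v,x) \<notin> fst c \<and> (x,v) \<notin> fst c) \<Longrightarrow> w' ! v = w ! v"
    and cups: "\<And>x y. (x,y) \<in> fst c \<Longrightarrow> (w' ! x = Vee \<and> w' ! y = Wedge) \<or> (w' ! x = Wedge \<and> w' ! y = Vee)"
  shows "oriented c w'"
proof -
  note W = wfD[OF orD(1)[OF O]]
  have ray_nend: "\<And>r. r \<in> snd c \<Longrightarrow> (\<forall>x. (r,x) \<notin> fst c \<and> (x,r) \<notin> fst c)"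
    using W(4) by blast
  have rs: "\<And>r. r \<in> snd c \<Longrightarrow> w' ! r = w ! r" using ray_nend same W(2) len by simp
  show ?thesis
  proof (rule orI)
    show "wf_diag (length w') c" using orD(1)[OF O] len by simp
    show "w' ! v = Circ \<or> w' ! v = Cross" if "v < length w'" "free_vertex c v" for v
      using orD(2)[OF O, of v] that same[of v] len unfolding free_iff by auto
    show "\<And>x y. (x,y) \<in> fst c \<Longrightarrow> (w' ! x = Vee \<and> w' ! y = Wedge) \<or> (w' ! x = Wedge \<and> w' ! y = Vee)"
      by (rule cups)
    show "w' ! r = Vee \<or> w' ! r = Wedge" if "r \<in> snd c" for r using rs[OF that] orD(4)[OF O that] by simp
    show "\<not> (w' ! r = Vee \<and> w' ! s = Wedge)" if "r \<in> snd c" "s \<in> snd c" "r < s" for r s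
      using rs[OF that(1)] rs[OF that(2)] orD(5)[OF O that] by simp
  qed
qed


definition blk :: "weight \<Rightarrow> weight set" where
  "blk w0 = {\<mu>. \<exists>\<sigma>. \<sigma> permutes {..<length w0}
       \<and> (\<forall>i<length w0. w0 ! i \<in> {Circ, Cross} \<longrightarrow> \<sigma> i = i)
       \<and> \<mu> = permute_list \<sigma> w0}"

lemma block_blk: "is_block \<Lambda> \<Longrightarrow> \<exists>w0. \<Lambda> = blk w0"
  unfolding is_block_def blk_def permute_list_def by blast

lemma blk_len: "\<mu> \<in> blk w0 \<Longrightarrow> length \<mu> = length w0"
  unfolding blk_def by auto

lemma blk_count: "\<mu> \<in> blk w0 \<Longrightarrow> count_list \<mu> x = count_list w0 x"
  unfolding blk_def by (auto simp: mset_permute_list simp flip: count_mset)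

lemma blk_cc:
  assumes "\<mu> \<in> blk w0" "i < length w0" "\<mu> ! i = Circ \<or> \<mu> ! i = Cross"
  shows "\<mu> ! i = w0 ! i"
proof -
  obtain \<sigma> where s: "\<sigma> permutes {..<length w0}" "\<forall>i<length w0. w0 ! i \<in> {Circ, Cross} \<longrightarrow> \<sigma> i = i"
    "\<mu> = permute_list \<sigma> w0" using assms(1) unfolding blk_def by blast
  have mi: "\<mu> ! i = w0 ! \<sigma> i" using s(1,3) assms(2) by (simp add: permute_list_nth)
  have "\<sigma> i < length w0" using permutes_in_image[OF s(1)] assms(2) by simp
  then have "\<sigma> (\<sigma> i) = \<sigma> i" using s(2) mi assms(3) by auto
  then have "\<sigma> i = i" using permutes_inj[OF s(1)] by (simp add: inj_eq)
  then show ?thesis using mi by simp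
qed

lemma blk_cc2:
  assumes "\<mu> \<in> blk w0" "\<mu>' \<in> blk w0" "i < length w0" "\<mu> ! i = Circ \<or> \<mu> ! i = Cross"
  shows "\<mu>' ! i = \<mu> ! i"
proof -
  have e: "\<mu> ! i = w0 ! i" by (rule blk_cc[OF assms(1,3,4)])
  obtain \<sigma> where s: "\<sigma> permutes {..<length w0}" "\<forall>i<length w0. w0 ! i \<in> {Circ, Cross} \<longrightarrow> \<sigma> i = i"
    "\<mu>' = permute_list \<sigma> w0" using assms(2) unfolding blk_def by blast
  have "\<sigma> i = i" using s(2) e assms(3,4) by auto
  then show ?thesis using s(1,3) assms(3) e by (simp add: permute_list_nth)
qed

lemma blk_perm:
  assumes "\<mu> \<in> blk w0" "\<tau> permutes {..<length w0}"
    "\<And>i. i < length w0 \<Longrightarrow> \<mu> ! i = Circ \<or> \<mu> ! i = Cross \<Longrightarrow> \<tau> i = i"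
  shows "permute_list \<tau> \<mu> \<in> blk w0"
proof -
  obtain \<sigma> where s: "\<sigma> permutes {..<length w0}" "\<forall>i<length w0. w0 ! i \<in> {Circ, Cross} \<longrightarrow> \<sigma> i = i"
    "\<mu> = permute_list \<sigma> w0" using assms(1) unfolding blk_def by blast
  have "permute_list \<tau> \<mu> = permute_list (\<sigma> \<circ> \<tau>) w0"
    using s(3) permute_list_compose[of \<tau> w0 \<sigma>] assms(2) by simp
  moreover have "\<sigma> \<circ> \<tau> permutes {..<length w0}" by (rule permutes_compose[OF assms(2) s(1)])
  moreover have "\<forall>i<length w0. w0 ! i \<in> {Circ, Cross} \<longrightarrow> (\<sigma> \<circ> \<tau>) i = i"
  proof (intro allI impI)
    fix i assume i: "i < length w0" "w0 ! i \<in> {Circ, Cross}"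
    have "\<sigma> i = i" using s(2) i by auto
    then have "\<mu> ! i = w0 ! i" using s(1,3) i by (simp add: permute_list_nth)
    then have "\<tau> i = i" using assms(3)[OF i(1)] i(2) by auto
    then show "(\<sigma> \<circ> \<tau>) i = i" using \<open>\<sigma> i = i\<close> by simp
  qed
  ultimately show ?thesis unfolding blk_def by blast
qed

lemma clw_inj:
  assumes "\<mu> \<in> blk w0" "\<mu>' \<in> blk w0" "clw \<mu> = clw \<mu>'"
  shows "\<mu> = \<mu>'"
proof -
  have "count_list \<mu> Wedge = count_list \<mu>' Wedge" "count_list \<mu> Vee = count_list \<mu>' Vee"
    using blk_count[OF assms(1)] blk_count[OF assms(2)] by auto
  then show ?thesis using assms(3) unfolding clw_def by simp
qed

definition partner :: "(nat \<times> nat) set \<Rightarrow> nat \<Rightarrow> nat" where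
  "partner C i = (if \<exists>j. (i,j) \<in> C \<or> (j,i) \<in> C then (SOME j. (i,j) \<in> C \<or> (j,i) \<in> C) else i)"

lemma partner_eq:
  assumes wf: "wf_diag n c" and C: "C \<subseteq> fst c" and ij: "(i,j) \<in> C"
  shows "partner C i = j" "partner C j = i"
proof -
  note W = wfD[OF wf]
  have ijc: "(i,j) \<in> fst c" using C ij by auto
  have lt: "i < j" using W(1)[OF ijc] by simp
  have u1: "j' = j" if "(i,j') \<in> C \<or> (j',i) \<in> C" for j'
  proof (rule ccontr)
    assume ne: "j' \<noteq> j"
    from that show False
    proof
      assume a: "(i,j') \<in> C"
      then have "{i,j'} \<inter> {i,j} = {}" using W(3)[of i j' i j] C ne ijc by auto
      then show False by auto
    next
      assume a: "(j',i) \<in> C"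
      have "(j',i) \<noteq> (i,j)" using lt by auto
      then have "{j',i} \<inter> {i,j} = {}" using W(3)[of j' i i j] C a ijc by auto
      then show False by auto
    qed
  qed
  have u2: "i' = i" if "(j,i') \<in> C \<or> (i',j) \<in> C" for i'
  proof (rule ccontr)
    assume ne: "i' \<noteq> i"
    from that show False
    proof
      assume a: "(j,i') \<in> C"
      have "(j,i') \<noteq> (i,j)" using lt by auto
      then have "{j,i'} \<inter> {i,j} = {}" using W(3)[of j i' i j] C a ijc by auto
      then show False by auto
    next
      assume a: "(i',j) \<in> C"
      then have "{i',j} \<inter> {i,j} = {}" using W(3)[of i' j i j] C ne ijc by auto
      then show False by auto
    qed
  qed
  have e1: "\<exists>j'. (i,j') \<in> C \<or> (j',i) \<in> C" using ij by blast
  have e2: "\<exists>i'. (j,i') \<in> C \<or> (i',j) \<in> C" using ij by blast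
  show "partner C i = j"
    unfolding partner_def using e1 u1 someI_ex[OF e1] by simp
  show "partner C j = i"
    unfolding partner_def using e2 u2 someI_ex[OF e2] by simp
qed

lemma partner_none: "\<not> (\<exists>j. (i,j) \<in> C \<or> (j,i) \<in> C) \<Longrightarrow> partner C i = i"
  unfolding partner_def by simp

lemma partner_invol:
  assumes wf: "wf_diag n c" and C: "C \<subseteq> fst c"
  shows "partner C (partner C i) = i"
proof (cases "\<exists>j. (i,j) \<in> C \<or> (j,i) \<in> C")
  case True
  then obtain j where "(i,j) \<in> C \<or> (j,i) \<in> C" by blast
  then show ?thesis using partner_eq[OF wf C] by metis
next
  case False then show ?thesis by (simp add: partner_none)
qed

lemma partner_permutes:
  assumes wf: "wf_diag n c" and C: "C \<subseteq> fst c"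
  shows "partner C permutes {..<n}"
  unfolding permutes_def
proof (intro conjI allI impI)
  fix x assume "x \<notin> {..<n}"
  then have "\<not> (\<exists>j. (x,j) \<in> C \<or> (j,x) \<in> C)" using wfD(1)[OF wf] C by fastforce
  then show "partner C x = x" by (rule partner_none)
next
  fix y show "\<exists>!x. partner C x = y"
    using partner_invol[OF wf C] by metis
qed

definition CW :: "diag \<Rightarrow> weight \<Rightarrow> (nat \<times> nat) set" where
  "CW c w = {(i,j)\<in>fst c. w ! i = Wedge}"

definition flip :: "diag \<Rightarrow> weight \<Rightarrow> weight" where
  "flip c w = permute_list (partner (CW c w)) w"

lemma CW_sub: "CW c w \<subseteq> fst c" unfolding CW_def by auto

lemma flip_len: "length (flip c w) = length w"
  unfolding flip_def by simp

lemma flip_nth: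
  assumes O: "oriented c w" and v: "v < length w"
  shows "flip c w ! v = w ! partner (CW c w) v"
  unfolding flip_def
  by (rule permute_list_nth[OF partner_permutes[OF orD(1)[OF O] CW_sub] v])

lemma flip_count:
  assumes O: "oriented c w"
  shows "count_list (flip c w) x = count_list w x"
  unfolding flip_def
  using mset_permute_list[OF partner_permutes[OF orD(1)[OF O] CW_sub]]
  by (metis count_mset)

lemma flip_same:
  assumes O: "oriented c w" and v: "v < length w"
    and ne: "\<And>x y. (x,y) \<in> fst c \<Longrightarrow> w ! x = Wedge \<Longrightarrow> v \<noteq> x \<and> v \<noteq> y"
  shows "flip c w ! v = w ! v"
proof -
  have "\<not> (\<exists>j. (v,j) \<in> CW c w \<or> (j,v) \<in> CW c w)" using ne unfolding CW_def by fastforce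
  then show ?thesis using flip_nth[OF O v] partner_none by metis
qed

lemma flip_cup:
  assumes O: "oriented c w" and xy: "(x,y) \<in> fst c"
  shows "flip c w ! x = Vee \<and> flip c w ! y = Wedge"
proof -
  note W = wfD[OF orD(1)[OF O]]
  have len: "x < length w" "y < length w" using W(1)[OF xy] by auto
  show ?thesis
  proof (cases "w ! x = Wedge")
    case True
    then have cw: "(x,y) \<in> CW c w" using xy unfolding CW_def by simp
    have "partner (CW c w) x = y" "partner (CW c w) y = x"
      using partner_eq[OF orD(1)[OF O] CW_sub cw] by auto
    moreover have "w ! y = Vee" using orD(3)[OF O xy] True by auto
    ultimately show ?thesis using flip_nth[OF O len(1)] flip_nth[OF O len(2)] True by simp
  next
    case False
    then have lab: "w ! x = Vee" "w ! y = Wedge" using orD(3)[OF O xy] by auto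
    have ne: "(v = x \<or> v = y) \<Longrightarrow> (\<And>k l. (k,l) \<in> fst c \<Longrightarrow> w ! k = Wedge \<Longrightarrow> v \<noteq> k \<and> v \<noteq> l)" for v
    proof -
      fix k l assume v: "v = x \<or> v = y" and kl: "(k,l) \<in> fst c" "w ! k = Wedge"
      have "(k,l) \<noteq> (x,y)" using kl False by auto
      then have "{k,l} \<inter> {x,y} = {}" using W(3)[OF kl(1) xy] by simp
      then show "v \<noteq> k \<and> v \<noteq> l" using v by auto
    qed
    have "flip c w ! x = w ! x" by (rule flip_same[OF O len(1)]) (use ne in blast)
    moreover have "flip c w ! y = w ! y" by (rule flip_same[OF O len(2)]) (use ne in blast)
    ultimately show ?thesis using lab by simp
  qed
qed

lemma flip_nonend:
  assumes O: "oriented c w" and v: "v < length w"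
    and ne: "\<forall>x. (v,x) \<notin> fst c \<and> (x,v) \<notin> fst c"
  shows "flip c w ! v = w ! v"
  using flip_same[OF O v] ne by blast

lemma flip_D0:
  assumes O: "oriented c w"
  shows "D0 c (flip c w)"
proof -
  have "oriented c (flip c w)"
    by (rule relabel[OF O flip_len]) (use flip_nonend[OF O] flip_cup[OF O] in auto)
  then show ?thesis unfolding D0_def using flip_cup[OF O] by auto
qed

lemma flip_blk:
  assumes O: "oriented c w" and b: "w \<in> blk w0"
  shows "flip c w \<in> blk w0"
  unfolding flip_def
proof (rule blk_perm[OF b])
  have "length w = length w0" by (rule blk_len[OF b])
  then show "partner (CW c w) permutes {..<length w0}"
    using partner_permutes[OF orD(1)[OF O] CW_sub] by simp
  fix i assume i: "i < length w0" "w ! i = Circ \<or> w ! i = Cross"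
  have "\<not> (\<exists>j. (i,j) \<in> CW c w \<or> (j,i) \<in> CW c w)"
    using orD(3)[OF O] i(2) unfolding CW_def by fastforce
  then show "partner (CW c w) i = i" by (rule partner_none)
qed


lemma clw_len: "length (clw \<mu>) = count_list \<mu> Wedge + length \<mu> + count_list \<mu> Vee"
  unfolding clw_def by simp

lemma clw_L: "v < count_list \<mu> Wedge \<Longrightarrow> clw \<mu> ! v = Vee"
  unfolding clw_def by (simp add: nth_append)

lemma clw_M:
  assumes "count_list \<mu> Wedge \<le> v" "v < count_list \<mu> Wedge + length \<mu>"
  shows "clw \<mu> ! v = \<mu> ! (v - count_list \<mu> Wedge)"
proof -
  define p where "p = count_list \<mu> Wedge"
  define q where "q = count_list \<mu> Vee"
  have c: "clw \<mu> = replicate p Vee @ (\<mu> @ replicate q Wedge)" unfolding clw_def p_def q_def by simp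
  have "clw \<mu> ! v = (\<mu> @ replicate q Wedge) ! (v - p)"
    unfolding c using assms unfolding p_def[symmetric] by (simp add: nth_append)
  also have "\<dots> = \<mu> ! (v - p)" using assms unfolding p_def[symmetric] by (simp add: nth_append; linarith)
  finally show ?thesis unfolding p_def .
qed

lemma clw_R:
  assumes "count_list \<mu> Wedge + length \<mu> \<le> v" "v < length (clw \<mu>)"
  shows "clw \<mu> ! v = Wedge"
proof -
  define p where "p = count_list \<mu> Wedge"
  define q where "q = count_list \<mu> Vee"
  have c: "clw \<mu> = (replicate p Vee @ \<mu>) @ replicate q Wedge" unfolding clw_def p_def q_def by simp
  have l: "length (replicate p Vee @ \<mu>) = p + length \<mu>" by simp
  have "clw \<mu> ! v = replicate q Wedge ! (v - (p + length \<mu>))"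
    unfolding c nth_append l using assms unfolding p_def[symmetric] by simp
  also have "\<dots> = Wedge" using assms clw_len[of \<mu>] unfolding p_def[symmetric] q_def[symmetric] by simp
  finally show ?thesis .
qed

definition res :: "nat \<Rightarrow> nat \<Rightarrow> diag \<Rightarrow> diag" where
  "res p n A = ((\<lambda>(i,j). (i - p, j - p)) ` {(i,j)\<in>fst A. p \<le> i \<and> j < p + n},
     (\<lambda>v. v - p) ` {v. p \<le> v \<and> v < p + n \<and> (\<exists>u. (u < p \<or> p + n \<le> u) \<and> ((u,v) \<in> fst A \<or> (v,u) \<in> fst A))})"

lemma res_cup_iff:
  assumes "\<And>i j. (i,j) \<in> fst A \<Longrightarrow> i < j"
  shows "(x,y) \<in> fst (res p n A) \<longleftrightarrow> (x + p, y + p) \<in> fst A \<and> y < n"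
proof
  assume "(x,y) \<in> fst (res p n A)"
  then obtain i j where ij: "(i,j) \<in> fst A" "p \<le> i" "j < p + n" "x = i - p" "y = j - p"
    unfolding res_def by auto
  have "i < j" using assms ij(1) by blast
  then show "(x + p, y + p) \<in> fst A \<and> y < n" using ij by auto
next
  assume a: "(x + p, y + p) \<in> fst A \<and> y < n"
  then have "(x + p, y + p) \<in> {(i,j)\<in>fst A. p \<le> i \<and> j < p + n}" by auto
  then have "(\<lambda>(i,j). (i - p, j - p)) (x + p, y + p) \<in> fst (res p n A)"
    unfolding res_def by (metis (no_types, lifting) fst_conv imageI)
  then show "(x,y) \<in> fst (res p n A)" by simp
qed

lemma res_ray_iff:
  "r \<in> snd (res p n A) \<longleftrightarrow> r < n \<and> (\<exists>u. (u < p \<or> p + n \<le> u) \<and> ((u,r+p) \<in> fst A \<or> (r+p,u) \<in> fst A))"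
proof
  assume "r \<in> snd (res p n A)"
  then obtain v where v: "p \<le> v" "v < p + n" "\<exists>u. (u < p \<or> p + n \<le> u) \<and> ((u,v) \<in> fst A \<or> (v,u) \<in> fst A)" "r = v - p"
    unfolding res_def by auto
  have "v = r + p" using v(1,4) by simp
  then show "r < n \<and> (\<exists>u. (u < p \<or> p + n \<le> u) \<and> ((u,r+p) \<in> fst A \<or> (r+p,u) \<in> fst A))"
    using v(2,3) by simp
next
  assume a: "r < n \<and> (\<exists>u. (u < p \<or> p + n \<le> u) \<and> ((u,r+p) \<in> fst A \<or> (r+p,u) \<in> fst A))"
  then have "r + p \<in> {v. p \<le> v \<and> v < p + n \<and> (\<exists>u. (u < p \<or> p + n \<le> u) \<and> ((u,v) \<in> fst A \<or> (v,u) \<in> fst A))}"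
    by simp
  then have "(\<lambda>v. v - p) (r + p) \<in> snd (res p n A)" unfolding res_def snd_conv by (rule imageI)
  then show "r \<in> snd (res p n A)" by simp
qed

locale clos =
  fixes A :: diag and \<mu> :: weight and p n :: nat
  assumes O: "oriented A (clw \<mu>)" and closed: "snd A = {}"
    and p: "p = count_list \<mu> Wedge" and n: "n = length \<mu>"
begin

lemma W: "wf_diag (length (clw \<mu>)) A" using orD(1)[OF O] .

lemmas WD = wfD[OF W]

lemma lt: "(i,j) \<in> fst A \<Longrightarrow> i < j" using WD(1) by blast

lemma L: "v < p \<Longrightarrow> clw \<mu> ! v = Vee" using clw_L p by simp
lemma M: "p \<le> v \<Longrightarrow> v < p + n \<Longrightarrow> clw \<mu> ! v = \<mu> ! (v - p)" using clw_M p n by simp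
lemma R: "p + n \<le> v \<Longrightarrow> v < length (clw \<mu>) \<Longrightarrow> clw \<mu> ! v = Wedge" using clw_R p n by simp

lemma cuplab: "(x,y) \<in> fst A \<Longrightarrow> (clw \<mu> ! x = Vee \<and> clw \<mu> ! y = Wedge) \<or> (clw \<mu> ! x = Wedge \<and> clw \<mu> ! y = Vee)"
  using orD(3)[OF O] by blast

lemma noLL: "(x,y) \<in> fst A \<Longrightarrow> \<not> y < p"
  using cuplab[of x y] L[of x] L[of y] lt[of x y] by auto

lemma noRR: "(x,y) \<in> fst A \<Longrightarrow> \<not> p + n \<le> x"
  using cuplab[of x y] R[of x] R[of y] lt[of x y] WD(1)[of x y] by auto

lemma labL: "(x,y) \<in> fst A \<Longrightarrow> x < p \<Longrightarrow> clw \<mu> ! y = Wedge"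
  using cuplab[of x y] L[of x] by auto

lemma labR: "(x,y) \<in> fst A \<Longrightarrow> p + n \<le> y \<Longrightarrow> clw \<mu> ! x = Vee"
  using cuplab[of x y] R[of y] WD(1)[of x y] by auto

lemma rcup: "(x,y) \<in> fst (res p n A) \<longleftrightarrow> (x + p, y + p) \<in> fst A \<and> y < n"
  by (rule res_cup_iff) (rule lt)

lemma rray: "r \<in> snd (res p n A) \<longleftrightarrow> r < n \<and> (\<exists>u. (u < p \<or> p + n \<le> u) \<and> ((u,r+p) \<in> fst A \<or> (r+p,u) \<in> fst A))"
  by (rule res_ray_iff)

lemma ray_left: "u < p \<Longrightarrow> (r+p,u) \<in> fst A \<Longrightarrow> False"
  using noLL by blast

lemma RES: "oriented (res p n A) \<mu>"
proof (rule orI)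
  show "wf_diag (length \<mu>) (res p n A)"
  proof (rule wfI)
    show "\<And>i j. (i,j) \<in> fst (res p n A) \<Longrightarrow> i < j \<and> j < length \<mu>"
      using rcup lt n by fastforce
    show "\<And>r. r \<in> snd (res p n A) \<Longrightarrow> r < length \<mu>" using rray n by blast
    show "{i,j} \<inter> {k,l} = {}" if "(i,j) \<in> fst (res p n A)" "(k,l) \<in> fst (res p n A)" "(i,j) \<noteq> (k,l)" for i j k l
    proof -
      have "(i+p,j+p) \<in> fst A" "(k+p,l+p) \<in> fst A" "(i+p,j+p) \<noteq> (k+p,l+p)" using that rcup by auto
      from WD(3)[OF this] show ?thesis by auto
    qed
    show "i \<notin> snd (res p n A) \<and> j \<notin> snd (res p n A)" if "(i,j) \<in> fst (res p n A)" for i j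
    proof -
      have c: "(i+p,j+p) \<in> fst A" "j < n" using that rcup by auto
      have "i < j" using lt[OF c(1)] by simp
      have nr: False if "v = i \<or> v = j" "(u < p \<or> p + n \<le> u)" "(u,v+p) \<in> fst A \<or> (v+p,u) \<in> fst A" for v u
      proof -
        have d: "(u,v+p) \<noteq> (i+p,j+p)" "(v+p,u) \<noteq> (i+p,j+p)" using that(1,2) c(2) \<open>i < j\<close> by auto
        from that(3) show False
        proof
          assume e: "(u,v+p) \<in> fst A"
          show False using WD(3)[OF e c(1) d(1)] that(1) by auto
        next
          assume e: "(v+p,u) \<in> fst A"
          show False using WD(3)[OF e c(1) d(2)] that(1) by auto
        qed
      qed
      show ?thesis unfolding rray using nr by blast
    qed
    show "\<not> (i < k \<and> k < j \<and> j < l)" if "(i,j) \<in> fst (res p n A)" "(k,l) \<in> fst (res p n A)" for i j k l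
      using that rcup WD(5)[of "i+p" "j+p" "k+p" "l+p"] by auto
    show "\<not> (i < r \<and> r < j)" if h1: "(i,j) \<in> fst (res p n A)" and h2: "r \<in> snd (res p n A)" for i j r
    proof
      assume ir: "i < r \<and> r < j"
      have c: "(i+p,j+p) \<in> fst A" "j < n" using h1 rcup by auto
      obtain u where u: "u < p \<or> p + n \<le> u" "(u,r+p) \<in> fst A \<or> (r+p,u) \<in> fst A"
        using h2 rray by blast
      show False
      proof (cases "u < p")
        case True
        then have "(u,r+p) \<in> fst A" using u(2) ray_left by blast
        then show False using WD(5)[of u "r+p" "i+p" "j+p"] c(1) ir True by auto
      next
        case False
        then have "p + n \<le> u" using u(1) by simp
        then have "(r+p,u) \<in> fst A" using u(2) noRR by blast
        then show False using WD(5)[of "i+p" "j+p" "r+p" u] c ir \<open>p + n \<le> u\<close> by auto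
      qed
    qed
  qed
  show "\<mu> ! v = Circ \<or> \<mu> ! v = Cross" if "v < length \<mu>" "free_vertex (res p n A) v" for v
  proof -
    have nv: "v \<notin> snd (res p n A)" "\<And>x. (v,x) \<notin> fst (res p n A)" "\<And>x. (x,v) \<notin> fst (res p n A)"
      using that(2) unfolding free_iff by auto
    have "free_vertex A (v+p)"
      unfolding free_iff
    proof (intro conjI allI)
      show "v + p \<notin> snd A" using closed by simp
      fix x
      show "(v+p,x) \<notin> fst A"
      proof
        assume a: "(v+p,x) \<in> fst A"
        show False
        proof (cases "x < p + n")
          case True
          then have "(v, x - p) \<in> fst (res p n A)" using a rcup lt[OF a] by auto
          then show False using nv(2) by blast
        next
          case False
          then have "v \<in> snd (res p n A)" unfolding rray using that(1) n a
            by (intro conjI exI[of _ x]) auto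
          then show False using nv(1) by blast
        qed
      qed
      show "(x,v+p) \<notin> fst A"
      proof
        assume a: "(x,v+p) \<in> fst A"
        show False
        proof (cases "p \<le> x")
          case True
          then have "(x - p, v) \<in> fst (res p n A)" using a rcup that(1) n by auto
          then show False using nv(3) by blast
        next
          case False
          then have "v \<in> snd (res p n A)" unfolding rray using that(1) n a
            by (intro conjI exI[of _ x]) auto
          then show False using nv(1) by blast
        qed
      qed
    qed
    moreover have "v + p < length (clw \<mu>)" using that(1) n p clw_len[of \<mu>] by simp
    ultimately have "clw \<mu> ! (v+p) = Circ \<or> clw \<mu> ! (v+p) = Cross" using orD(2)[OF O] by blast
    then show ?thesis using M[of "v+p"] that(1) n by simp
  qed
  show "(\<mu> ! x = Vee \<and> \<mu> ! y = Wedge) \<or> (\<mu> ! x = Wedge \<and> \<mu> ! y = Vee)" if "(x,y) \<in> fst (res p n A)" for x y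
  proof -
    have c: "(x+p,y+p) \<in> fst A" "y < n" using that rcup by auto
    have "x < y" using lt[OF c(1)] by simp
    then show ?thesis using cuplab[OF c(1)] M[of "x+p"] M[of "y+p"] c(2) by simp
  qed
  have raylab: "(u < p \<and> (u,r+p) \<in> fst A \<and> \<mu> ! r = Wedge) \<or> (p + n \<le> u \<and> (r+p,u) \<in> fst A \<and> \<mu> ! r = Vee)"
    if "r < n" "u < p \<or> p + n \<le> u" "(u,r+p) \<in> fst A \<or> (r+p,u) \<in> fst A" for r u
  proof (cases "u < p")
    case True
    then have a: "(u,r+p) \<in> fst A" using that ray_left by blast
    then show ?thesis using labL[OF a True] M[of "r+p"] that(1) True by simp
  next
    case False
    then have pu: "p + n \<le> u" using that by simp
    then have a: "(r+p,u) \<in> fst A" using that noRR by blast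
    then show ?thesis using labR[OF a pu] M[of "r+p"] that(1) pu by simp
  qed
  show "\<mu> ! r = Vee \<or> \<mu> ! r = Wedge" if "r \<in> snd (res p n A)" for r
    using that rray raylab by blast
  show "\<not> (\<mu> ! r = Vee \<and> \<mu> ! s = Wedge)" if h1: "r \<in> snd (res p n A)" and h2: "s \<in> snd (res p n A)" and h3: "r < s" for r s
  proof
    assume lab: "\<mu> ! r = Vee \<and> \<mu> ! s = Wedge"
    obtain u where u: "r < n" "u < p \<or> p + n \<le> u" "(u,r+p) \<in> fst A \<or> (r+p,u) \<in> fst A"
      using h1 rray by blast
    obtain u' where u': "s < n" "u' < p \<or> p + n \<le> u'" "(u',s+p) \<in> fst A \<or> (s+p,u') \<in> fst A"
      using h2 rray by blast
    have a: "p + n \<le> u" "(r+p,u) \<in> fst A" using raylab[OF u] lab by auto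
    have b: "u' < p" "(u',s+p) \<in> fst A" using raylab[OF u'] lab by auto
    show False using WD(5)[OF b(2) a(2)] a(1) b(1) h3 u'(1) by auto
  qed
qed

end


context clos
begin

lemma len_clw: "length (clw \<mu>) = p + n + count_list \<mu> Vee" using clw_len[of \<mu>] p n by simp

lemma RW: "wf_diag n (res p n A)" using orD(1)[OF RES] n by simp

lemma ray_notcup: "r \<in> snd (res p n A) \<Longrightarrow> (r,x) \<notin> fst (res p n A) \<and> (x,r) \<notin> fst (res p n A)"
  using wfD(4)[OF RW] by blast

lemma inner_ray:
  assumes "(x,y) \<in> fst A" "x < p" "y < p + n"
  shows "y - p \<in> snd (res p n A)" "p \<le> y"
proof -
  show "p \<le> y" using noLL[OF assms(1)] by simp
  then show "y - p \<in> snd (res p n A)" unfolding rray using assms by (intro conjI exI[of _ x]) auto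
qed

lemma inner_ray2:
  assumes "(x,y) \<in> fst A" "p \<le> x" "p + n \<le> y"
  shows "x - p \<in> snd (res p n A)" "x < p + n"
proof -
  show "x < p + n" using noRR[OF assms(1)] by simp
  then show "x - p \<in> snd (res p n A)" unfolding rray using assms by (intro conjI exI[of _ y]) auto
qed

lemma REL:
  assumes len: "length \<mu>' = n" and cW: "count_list \<mu>' Wedge = p"
    and cV: "count_list \<mu>' Vee = count_list \<mu> Vee"
    and same: "\<And>v. v < n \<Longrightarrow> (\<forall>x. (v,x) \<notin> fst (res p n A) \<and> (x,v) \<notin> fst (res p n A)) \<Longrightarrow> \<mu>' ! v = \<mu> ! v"
    and cups: "\<And>x y. (x,y) \<in> fst (res p n A) \<Longrightarrow> (\<mu>' ! x = Vee \<and> \<mu>' ! y = Wedge) \<or> (\<mu>' ! x = Wedge \<and> \<mu>' ! y = Vee)"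
  shows "oriented A (clw \<mu>')"
proof -
  have len': "length (clw \<mu>') = length (clw \<mu>)" using clw_len[of \<mu>'] len cW cV len_clw by simp
  have L': "\<And>v. v < p \<Longrightarrow> clw \<mu>' ! v = Vee" using clw_L cW by metis
  have M': "\<And>v. p \<le> v \<Longrightarrow> v < p + n \<Longrightarrow> clw \<mu>' ! v = \<mu>' ! (v - p)" using clw_M[of \<mu>'] cW len by metis
  have R': "\<And>v. p + n \<le> v \<Longrightarrow> v < length (clw \<mu>) \<Longrightarrow> clw \<mu>' ! v = Wedge"
    using clw_R[of \<mu>'] cW len len' by metis
  have same_ray: "\<And>r. r \<in> snd (res p n A) \<Longrightarrow> \<mu>' ! r = \<mu> ! r"
    using same ray_notcup rray by blast
  show ?thesis
  proof (rule relabel[OF O len'])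
    fix v assume v: "v < length (clw \<mu>)" and ne: "\<forall>x. (v,x) \<notin> fst A \<and> (x,v) \<notin> fst A"
    have "free_vertex A v" unfolding free_iff using ne closed by simp
    then have cc: "clw \<mu> ! v = Circ \<or> clw \<mu> ! v = Cross" using orD(2)[OF O v] by simp
    have pv: "p \<le> v" using cc L[of v] by (cases "p \<le> v") auto
    have vn: "v < p + n" using cc R[of v] v by (cases "v < p + n") auto
    have "\<forall>x. (v - p,x) \<notin> fst (res p n A) \<and> (x,v - p) \<notin> fst (res p n A)"
    proof (intro allI conjI)
      fix x
      show "(v - p, x) \<notin> fst (res p n A)" using rcup ne pv by auto
      show "(x, v - p) \<notin> fst (res p n A)" using rcup ne pv by auto
    qed
    then have "\<mu>' ! (v - p) = \<mu> ! (v - p)" using same[of "v - p"] vn pv by simp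
    then show "clw \<mu>' ! v = clw \<mu> ! v" using M' M pv vn by simp
  next
    fix x y assume xy: "(x,y) \<in> fst A"
    have xly: "x < y" "y < length (clw \<mu>)" using WD(1)[OF xy] by auto
    have nR: "x < p + n" using noRR[OF xy] by simp
    show "(clw \<mu>' ! x = Vee \<and> clw \<mu>' ! y = Wedge) \<or> (clw \<mu>' ! x = Wedge \<and> clw \<mu>' ! y = Vee)"
    proof (cases "x < p")
      case True
      have "clw \<mu>' ! y = Wedge"
      proof (cases "y < p + n")
        case yin: True
        have r: "y - p \<in> snd (res p n A)" "p \<le> y" using inner_ray[OF xy True yin] by auto
        have "clw \<mu>' ! y = \<mu>' ! (y - p)" using M' r(2) yin by simp
        also have "\<dots> = \<mu> ! (y - p)" using same_ray[OF r(1)] .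
        also have "\<dots> = clw \<mu> ! y" using M r(2) yin by simp
        also have "\<dots> = Wedge" using labL[OF xy True] .
        finally show ?thesis .
      next
        case False
        then show ?thesis using R' xly by simp
      qed
      then show ?thesis using L' True by simp
    next
      case xp: False
      show ?thesis
      proof (cases "y < p + n")
        case True
        have "(x - p, y - p) \<in> fst (res p n A)" using rcup xy xp True xly by auto
        from cups[OF this] show ?thesis using M' xp True xly nR by simp
      next
        case False
        have r: "x - p \<in> snd (res p n A)" using inner_ray2[OF xy] xp False by simp
        have "clw \<mu>' ! x = \<mu>' ! (x - p)" using M' xp nR by simp
        also have "\<dots> = \<mu> ! (x - p)" using same_ray[OF r] .
        also have "\<dots> = clw \<mu> ! x" using M xp nR by simp
        also have "\<dots> = Vee" using labR[OF xy] False by simp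
        finally show ?thesis using R' False xly by simp
      qed
    qed
  qed
qed

lemma D0LIFT:
  assumes "D0 (res p n A) \<mu>"
  shows "D0 A (clw \<mu>)"
  unfolding D0_def
proof (intro conjI O ballI)
  fix c assume c: "c \<in> fst A"
  obtain x y where xy: "c = (x,y)" by (cases c)
  have a: "(x,y) \<in> fst A" using c xy by simp
  have xly: "x < y" "y < length (clw \<mu>)" using WD(1)[OF a] by auto
  have nR: "x < p + n" using noRR[OF a] by simp
  have "clw \<mu> ! x = Vee \<and> clw \<mu> ! y = Wedge"
  proof (cases "x < p")
    case True then show ?thesis using L labL[OF a] by simp
  next
    case xp: False
    show ?thesis
    proof (cases "y < p + n")
      case True
      have "(x - p, y - p) \<in> fst (res p n A)" using rcup a xp True xly by auto
      then have "\<mu> ! (x - p) = Vee \<and> \<mu> ! (y - p) = Wedge" using assms unfolding D0_def by blast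
      then show ?thesis using M xp True xly nR by simp
    next
      case False
      then show ?thesis using labR[OF a] R xly by simp
    qed
  qed
  then show "case c of (i,j) \<Rightarrow> clw \<mu> ! i = Vee \<and> clw \<mu> ! j = Wedge" using xy by simp
qed

lemma D0DOWN:
  assumes "D0 A (clw \<mu>)"
  shows "D0 (res p n A) \<mu>"
  unfolding D0_def
proof (intro conjI RES ballI)
  fix c assume c: "c \<in> fst (res p n A)"
  obtain x y where xy: "c = (x,y)" by (cases c)
  have a: "(x+p,y+p) \<in> fst A" "y < n" using c xy rcup by auto
  have "x < y" using lt[OF a(1)] by simp
  have "clw \<mu> ! (x+p) = Vee \<and> clw \<mu> ! (y+p) = Wedge" using assms a(1) unfolding D0_def by blast
  then show "case c of (i,j) \<Rightarrow> \<mu> ! i = Vee \<and> \<mu> ! j = Wedge" using xy M[of "x+p"] M[of "y+p"] a(2) \<open>x < y\<close> by simp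
qed

lemma DEG: "deg A (clw \<mu>) = deg (res p n A) \<mu>"
proof -
  let ?f = "\<lambda>(x,y). (x + p, y + p :: nat)"
  have eq: "{(i,j)\<in>fst A. clw \<mu> ! i = Wedge} = ?f ` {(x,y)\<in>fst (res p n A). \<mu> ! x = Wedge}"
  proof (intro equalityI subsetI)
    fix c assume c: "c \<in> {(i,j)\<in>fst A. clw \<mu> ! i = Wedge}"
    obtain i j where ij: "c = (i,j)" by (cases c)
    have a: "(i,j) \<in> fst A" "clw \<mu> ! i = Wedge" using c ij by auto
    have xly: "i < j" "j < length (clw \<mu>)" using WD(1)[OF a(1)] by auto
    have ip: "p \<le> i" using a(2) L[of i] by (cases "p \<le> i") auto
    have nR: "i < p + n" using noRR[OF a(1)] by simp
    have jn: "j < p + n" using labR[OF a(1)] a(2) by (cases "j < p + n") auto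
    have "(i - p, j - p) \<in> fst (res p n A)" using rcup a(1) ip jn xly by auto
    moreover have "\<mu> ! (i - p) = Wedge" using M ip nR a(2) by simp
    moreover have "c = ?f (i - p, j - p)" using ij ip xly by simp
    ultimately show "c \<in> ?f ` {(x,y)\<in>fst (res p n A). \<mu> ! x = Wedge}" by blast
  next
    fix c assume "c \<in> ?f ` {(x,y)\<in>fst (res p n A). \<mu> ! x = Wedge}"
    then obtain x y where xy: "c = (x + p, y + p)" "(x,y) \<in> fst (res p n A)" "\<mu> ! x = Wedge" by auto
    have a: "(x+p,y+p) \<in> fst A" "y < n" using xy(2) rcup by auto
    have "x < y" using lt[OF a(1)] by simp
    then have "clw \<mu> ! (x+p) = Wedge" using M[of "x+p"] a(2) xy(3) by simp
    then show "c \<in> {(i,j)\<in>fst A. clw \<mu> ! i = Wedge}" using a(1) xy(1) by simp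
  qed
  have "inj_on ?f {(x,y)\<in>fst (res p n A). \<mu> ! x = Wedge}" by (auto simp: inj_on_def)
  then show ?thesis unfolding deg_def eq by (rule card_image)
qed

end


lemma count_rep: "count_list (replicate k x) y = (if x = y then k else 0)"
  by (induction k) auto

lemma prefix_count:
  assumes "r \<le> length w"
  shows "card {v. v < r \<and> w ! v = x} = count_list (take r w) x"
proof -
  have "{v. v < length (take r w) \<and> take r w ! v = x} = {v. v < r \<and> w ! v = x}"
    using assms by auto
  then show ?thesis using count_card[of "take r w" x] by simp
qed

lemma prefix_le:
  assumes D: "D0 c w" and r: "r \<in> snd c" "w ! r = Wedge"
  shows "card {v. v < r \<and> w ! v = Vee} \<le> card {v. v < r \<and> w ! v = Wedge}"
proof -
  have O: "oriented c w" and lab: "\<And>x y. (x,y) \<in> fst c \<Longrightarrow> w ! x = Vee \<and> w ! y = Wedge"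
    using D unfolding D0_def by auto
  note W = wfD[OF orD(1)[OF O]]
  have rl: "r < length w" using W(2)[OF r(1)] .
  have ex: "\<exists>l. (v,l) \<in> fst c \<and> l < r" if v: "v < r" "w ! v = Vee" for v
  proof -
    have "v < length w" using v rl by simp
    from nonfree[OF O this] v(2) consider "v \<in> snd c" | l where "(v,l) \<in> fst c" | i where "(i,v) \<in> fst c"
      by auto
    then show ?thesis
    proof cases
      case 1 then show ?thesis using orD(5)[OF O 1 r(1) v(1)] v r by simp
    next
      case (2 l)
      have "l \<noteq> r" using W(4)[OF 2] r(1) by auto
      moreover have "v < l" using W(1)[OF 2] by simp
      moreover have "\<not> (v < r \<and> r < l)" using W(6)[OF 2 r(1)] .
      ultimately show ?thesis using 2 v(1) by (intro exI[of _ l]) auto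
    next
      case (3 i)
      then show ?thesis using lab[OF 3] v by simp
    qed
  qed
  define g where "g v = (SOME l. (v,l) \<in> fst c \<and> l < r)" for v
  have g: "(v, g v) \<in> fst c \<and> g v < r" if "v < r" "w ! v = Vee" for v
    unfolding g_def using someI_ex[OF ex[OF that]] .
  have "inj_on g {v. v < r \<and> w ! v = Vee}"
  proof (rule inj_onI)
    fix v v' assume a: "v \<in> {v. v < r \<and> w ! v = Vee}" "v' \<in> {v. v < r \<and> w ! v = Vee}" "g v = g v'"
    have c1: "(v, g v) \<in> fst c" using g a(1) by blast
    have c2: "(v', g v) \<in> fst c" using g a(2) a(3) by fastforce
    show "v = v'"
    proof (rule ccontr)
      assume "v \<noteq> v'"
      then have "{v, g v} \<inter> {v', g v} = {}" using W(3)[OF c1 c2] by auto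
      then show False by auto
    qed
  qed
  moreover have "g ` {v. v < r \<and> w ! v = Vee} \<subseteq> {v. v < r \<and> w ! v = Wedge}"
    using g lab by blast
  moreover have "finite {v. v < r \<and> w ! v = Wedge}" by simp
  ultimately show ?thesis by (rule card_inj_on_le)
qed

lemma closed_clw:
  assumes D: "D0 c (clw \<alpha>)"
  shows "snd c = {}"
proof -
  define p where "p = count_list \<alpha> Wedge"
  define q where "q = count_list \<alpha> Vee"
  define n where "n = length \<alpha>"
  let ?w = "clw \<alpha>"
  have O: "oriented c ?w" using D unfolding D0_def by auto
  note W = wfD[OF orD(1)[OF O]]
  have cw: "?w = replicate p Vee @ \<alpha> @ replicate q Wedge" unfolding clw_def p_def q_def by simp
  have lw: "length ?w = p + n + q" unfolding cw n_def by simp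
  have noW: "\<not> (r \<in> snd c \<and> ?w ! r = Wedge)" for r
  proof
    assume a: "r \<in> snd c \<and> ?w ! r = Wedge"
    have rl: "r < length ?w" using W(2) a by simp
    have le: "count_list (take r ?w) Vee \<le> count_list (take r ?w) Wedge"
      using prefix_le[OF D, of r] a prefix_count[of r ?w] rl by simp
    show False
    proof (cases "r < p")
      case True then show False using clw_L[of r \<alpha>] a p_def by simp
    next
      case rp: False
      show False
      proof (cases "r < p + n")
        case True
        define k where "k = r - p"
        have kn: "k < n" using True rp k_def by simp
        have tk: "take r ?w = replicate p Vee @ take k \<alpha>"
          unfolding cw k_def using rp True n_def by (simp add: take_append)
        have ak: "\<alpha> ! k = Wedge" using clw_M[of \<alpha> r] a rp True unfolding p_def n_def k_def by simp
        have "\<alpha> = take k \<alpha> @ drop k \<alpha>" by simp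
        moreover have "drop k \<alpha> = \<alpha> ! k # drop (Suc k) \<alpha>" using kn n_def by (simp add: Cons_nth_drop_Suc)
        ultimately have "count_list \<alpha> Wedge = count_list (take k \<alpha>) Wedge + 1 + count_list (drop (Suc k) \<alpha>) Wedge"
          using ak by (metis add.commute add_Suc_right count_list.simps(2) count_list_append plus_1_eq_Suc)
        then have "count_list (take k \<alpha>) Wedge < p" unfolding p_def by simp
        moreover have "count_list (take r ?w) Vee \<ge> p" unfolding tk by (simp add: count_list_append count_rep)
        moreover have "count_list (take r ?w) Wedge = count_list (take k \<alpha>) Wedge"
          unfolding tk by (simp add: count_list_append count_rep)
        ultimately show False using le by simp
      next
        case False
        have tk: "take r ?w = replicate p Vee @ \<alpha> @ replicate (r - p - n) Wedge"
          unfolding cw using rp False n_def rl lw by (simp add: take_append)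
        have "count_list (take r ?w) Vee = p + q" unfolding tk q_def by (simp add: count_list_append count_rep)
        moreover have "count_list (take r ?w) Wedge = p + (r - p - n)" unfolding tk p_def
          by (simp add: count_list_append count_rep)
        ultimately show False using le rl lw False by simp
      qed
    qed
  qed
  have cV: "count_list ?w Vee = p + q" unfolding cw q_def by (simp add: count_list_append count_rep)
  have cW: "count_list ?w Wedge = p + q" unfolding cw p_def by (simp add: count_list_append count_rep)
  have e1: "{r\<in>snd c. ?w ! r = Wedge} = {}" using noW by auto
  have "card {r\<in>snd c. ?w ! r = Vee} = 0"
    using CNT[OF O, of Vee] CNT[OF O, of Wedge] cV cW e1 by simp
  moreover have "finite {r\<in>snd c. ?w ! r = Vee}" using oriented_finite(2)[OF O] by simp
  ultimately have e2: "{r\<in>snd c. ?w ! r = Vee} = {}" by simp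
  show ?thesis using e1 e2 orD(4)[OF O] by blast
qed


lemma alpha_unique:
  assumes D1: "D0 a \<alpha>1" and D2: "D0 a \<alpha>2" and b1: "\<alpha>1 \<in> blk w0" and b2: "\<alpha>2 \<in> blk w0"
  shows "\<alpha>1 = \<alpha>2"
proof (rule nth_equalityI)
  have O1: "oriented a \<alpha>1" and l1: "\<And>x y. (x,y) \<in> fst a \<Longrightarrow> \<alpha>1 ! x = Vee \<and> \<alpha>1 ! y = Wedge"
    using D1 unfolding D0_def by auto
  have O2: "oriented a \<alpha>2" and l2: "\<And>x y. (x,y) \<in> fst a \<Longrightarrow> \<alpha>2 ! x = Vee \<and> \<alpha>2 ! y = Wedge"
    using D2 unfolding D0_def by auto
  show len: "length \<alpha>1 = length \<alpha>2" using blk_len[OF b1] blk_len[OF b2] by simp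
  fix v assume v: "v < length \<alpha>1"
  show "\<alpha>1 ! v = \<alpha>2 ! v"
  proof (cases "free_vertex a v")
    case True
    then have "\<alpha>1 ! v = Circ \<or> \<alpha>1 ! v = Cross" using orD(2)[OF O1 v] by simp
    then show ?thesis using blk_cc2[OF b1 b2, of v] v blk_len[OF b1] by simp
  next
    case False
    then consider "v \<in> snd a" | x where "(v,x) \<in> fst a" | x where "(x,v) \<in> fst a"
      unfolding free_iff by blast
    then show ?thesis
    proof cases
      case 1
      have "count_list \<alpha>1 Wedge = count_list \<alpha>2 Wedge" using blk_count[OF b1] blk_count[OF b2] by simp
      then show ?thesis using RAYS[OF O1 O2 _ 1] by simp
    next
      case (2 x) then show ?thesis using l1 l2 by metis
    next
      case (3 x) then show ?thesis using l1 l2 by metis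
    qed
  qed
qed

lemma THE_alpha:
  assumes O: "oriented a w" and b: "w \<in> blk w0"
  shows "(THE \<alpha>. \<alpha> \<in> blk w0 \<and> cup_under \<alpha> = a) = flip a w"
proof (rule the_equality)
  show "flip a w \<in> blk w0 \<and> cup_under (flip a w) = a"
    using flip_blk[OF O b] D0_cup_under[OF flip_D0[OF O]] by simp
  fix \<alpha> assume a: "\<alpha> \<in> blk w0 \<and> cup_under \<alpha> = a"
  then have "D0 a \<alpha>" using cup_under_D0[of \<alpha>] by simp
  then show "\<alpha> = flip a w" using alpha_unique[OF _ flip_D0[OF O]] a flip_blk[OF O b] by blast
qed

lemma cl_cup_eq:
  assumes O: "oriented a w" and b: "w \<in> blk w0"
  shows "cl_cup (blk w0) a = cup_under (clw (flip a w))"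
  unfolding cl_cup_def THE_alpha[OF O b] ..

lemma cl_cap_eq: "cl_cap L b = cl_cup L b"
  unfolding cl_cap_def cl_cup_def cap_over_def ..

lemma FWD:
  assumes O: "oriented a w" and b: "w \<in> blk w0"
    and p: "p = count_list w0 Wedge" and n: "n = length w0"
  shows "oriented (cl_cup (blk w0) a) (clw w) \<and> snd (cl_cup (blk w0) a) = {}
    \<and> res p n (cl_cup (blk w0) a) = a \<and> deg (cl_cup (blk w0) a) (clw w) = deg a w"
proof -
  define \<alpha> where "\<alpha> = flip a w"
  define A where "A = cup_under (clw \<alpha>)"
  have cA: "cl_cup (blk w0) a = A" unfolding A_def \<alpha>_def by (rule cl_cup_eq[OF O b])
  have pw: "p = count_list w Wedge" using blk_count[OF b] p by simp
  have nw: "n = length w" using blk_len[OF b] n by simp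
  have pa: "p = count_list \<alpha> Wedge" using pw flip_count[OF O] unfolding \<alpha>_def by simp
  have na: "n = length \<alpha>" using nw flip_len unfolding \<alpha>_def by simp
  have DA: "D0 A (clw \<alpha>)" unfolding A_def by (rule cup_under_D0)
  have cl: "snd A = {}" by (rule closed_clw[OF DA])
  have OA: "oriented A (clw \<alpha>)" using DA unfolding D0_def by simp
  interpret c1: clos A \<alpha> p n using OA cl pa na by unfold_locales
  have Da: "D0 a \<alpha>" unfolding \<alpha>_def by (rule flip_D0[OF O])
  have ra: "res p n A = a"
    using D0_cup_under[OF c1.D0DOWN[OF DA]] D0_cup_under[OF Da] by simp
  have OAw: "oriented A (clw w)"
  proof (rule c1.REL)
    show "length w = n" using nw by simp
    show "count_list w Wedge = p" using pw by simp
    show "count_list w Vee = count_list \<alpha> Vee" using flip_count[OF O] unfolding \<alpha>_def by simp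
    show "w ! v = \<alpha> ! v" if "v < n" "\<forall>x. (v,x) \<notin> fst (res p n A) \<and> (x,v) \<notin> fst (res p n A)" for v
      using flip_nonend[OF O, of v] that ra nw unfolding \<alpha>_def by simp
    show "(w ! x = Vee \<and> w ! y = Wedge) \<or> (w ! x = Wedge \<and> w ! y = Vee)" if "(x,y) \<in> fst (res p n A)" for x y
      using orD(3)[OF O, of x y] that ra by simp
  qed
  interpret c2: clos A w p n using OAw cl pw nw by unfold_locales
  have "deg A (clw w) = deg a w" using c2.DEG ra by simp
  then show ?thesis using cA OAw cl ra by simp
qed

lemma SUR:
  assumes OA: "oriented A (clw \<mu>)" and cl: "snd A = {}" and b: "\<mu> \<in> blk w0"
    and p: "p = count_list w0 Wedge" and n: "n = length w0"
  shows "oriented (res p n A) \<mu> \<and> cl_cup (blk w0) (res p n A) = A"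
proof -
  have pm: "p = count_list \<mu> Wedge" using blk_count[OF b] p by simp
  have nm: "n = length \<mu>" using blk_len[OF b] n by simp
  interpret c1: clos A \<mu> p n using OA cl pm nm by unfold_locales
  define a where "a = res p n A"
  have Oa: "oriented a \<mu>" unfolding a_def by (rule c1.RES)
  define \<alpha> where "\<alpha> = flip a \<mu>"
  have pa: "p = count_list \<alpha> Wedge" using pm flip_count[OF Oa] unfolding \<alpha>_def by simp
  have na: "n = length \<alpha>" using nm flip_len unfolding \<alpha>_def by simp
  have OAa: "oriented A (clw \<alpha>)"
  proof (rule c1.REL)
    show "length \<alpha> = n" using na by simp
    show "count_list \<alpha> Wedge = p" using pa by simp
    show "count_list \<alpha> Vee = count_list \<mu> Vee" using flip_count[OF Oa] unfolding \<alpha>_def by simp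
    show "\<alpha> ! v = \<mu> ! v" if "v < n" "\<forall>x. (v,x) \<notin> fst (res p n A) \<and> (x,v) \<notin> fst (res p n A)" for v
      using flip_nonend[OF Oa, of v] that nm unfolding \<alpha>_def a_def by simp
    show "(\<alpha> ! x = Vee \<and> \<alpha> ! y = Wedge) \<or> (\<alpha> ! x = Wedge \<and> \<alpha> ! y = Vee)" if "(x,y) \<in> fst (res p n A)" for x y
      using flip_cup[OF Oa, of x y] that unfolding \<alpha>_def a_def by simp
  qed
  interpret c2: clos A \<alpha> p n using OAa cl pa na by unfold_locales
  have "D0 A (clw \<alpha>)" using c2.D0LIFT flip_D0[OF Oa] unfolding \<alpha>_def a_def by simp
  then have "cup_under (clw \<alpha>) = A" by (rule D0_cup_under)
  then have "cl_cup (blk w0) a = A" using cl_cup_eq[OF Oa b] unfolding \<alpha>_def by simp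
  then show ?thesis using Oa unfolding a_def by simp
qed

theorem lemma4p2:
  assumes "is_block \<Lambda>"
  shows "bij_betw (cl_circ \<Lambda>) (circ_diagrams \<Lambda>) (closed_circ_diagrams (clw ` \<Lambda>))
    \<and> (\<forall>x\<in>circ_diagrams \<Lambda>. deg_circ (cl_circ \<Lambda> x) = deg_circ x)"
proof -
  obtain w0 where L: "\<Lambda> = blk w0" using block_blk[OF assms] by blast
  define p where "p = count_list w0 Wedge"
  define n where "n = length w0"
  have mem: "x \<in> circ_diagrams \<Lambda> \<longleftrightarrow> (case x of (a,w,b) \<Rightarrow> oriented a w \<and> oriented b w \<and> w \<in> blk w0)" for x
    unfolding circ_diagrams_def oriented_circ_def L by (cases x) auto
  have clx: "cl_circ \<Lambda> (a,w,b) = (cl_cup (blk w0) a, clw w, cl_cup (blk w0) b)" for a w b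
    unfolding cl_circ_def L cl_cap_eq by simp
  have F: "cl_circ \<Lambda> x \<in> closed_circ_diagrams (clw ` \<Lambda>) \<and> deg_circ (cl_circ \<Lambda> x) = deg_circ x"
    if x: "x \<in> circ_diagrams \<Lambda>" for x
  proof -
    obtain a w b where xe: "x = (a,w,b)" by (cases x)
    have h: "oriented a w" "oriented b w" "w \<in> blk w0" using x mem[of x] xe by auto
    note f1 = FWD[OF h(1) h(3) p_def n_def] and f2 = FWD[OF h(2) h(3) p_def n_def]
    show ?thesis
      unfolding xe clx closed_circ_diagrams_def oriented_circ_def closed_circ_def deg_circ_def
      using f1 f2 h(3) L by auto
  qed
  have inj: "inj_on (cl_circ \<Lambda>) (circ_diagrams \<Lambda>)"
  proof (rule inj_onI)
    fix x y assume x: "x \<in> circ_diagrams \<Lambda>" and y: "y \<in> circ_diagrams \<Lambda>" and e: "cl_circ \<Lambda> x = cl_circ \<Lambda> y"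
    obtain a w b where xe: "x = (a,w,b)" by (cases x)
    obtain a' w' b' where ye: "y = (a',w',b')" by (cases y)
    have h: "oriented a w" "oriented b w" "w \<in> blk w0" using x mem[of x] xe by auto
    have h': "oriented a' w'" "oriented b' w'" "w' \<in> blk w0" using y mem[of y] ye by auto
    have e1: "cl_cup (blk w0) a = cl_cup (blk w0) a'" "clw w = clw w'" "cl_cup (blk w0) b = cl_cup (blk w0) b'"
      using e unfolding xe ye clx by auto
    have "w = w'" by (rule clw_inj[OF h(3) h'(3) e1(2)])
    moreover have "a = a'"
      using FWD[OF h(1) h(3) p_def n_def] FWD[OF h'(1) h'(3) p_def n_def] e1(1) by metis
    moreover have "b = b'"
      using FWD[OF h(2) h(3) p_def n_def] FWD[OF h'(2) h'(3) p_def n_def] e1(3) by metis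
    ultimately show "x = y" using xe ye by simp
  qed
  have surj: "closed_circ_diagrams (clw ` \<Lambda>) \<subseteq> cl_circ \<Lambda> ` circ_diagrams \<Lambda>"
  proof
    fix y assume y: "y \<in> closed_circ_diagrams (clw ` \<Lambda>)"
    obtain A \<nu> B where ye: "y = (A,\<nu>,B)" by (cases y)
    have h: "oriented A \<nu>" "oriented B \<nu>" "snd A = {}" "snd B = {}" "\<nu> \<in> clw ` blk w0"
      using y unfolding ye closed_circ_diagrams_def oriented_circ_def closed_circ_def L by auto
    obtain \<mu> where m: "\<mu> \<in> blk w0" "\<nu> = clw \<mu>" using h(5) by blast
    note s1 = SUR[OF h(1)[unfolded m(2)] h(3) m(1) p_def n_def]
    note s2 = SUR[OF h(2)[unfolded m(2)] h(4) m(1) p_def n_def]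
    have "(res p n A, \<mu>, res p n B) \<in> circ_diagrams \<Lambda>" using mem s1 s2 m(1) by simp
    moreover have "cl_circ \<Lambda> (res p n A, \<mu>, res p n B) = y" unfolding clx ye using s1 s2 m(2) by simp
    ultimately show "y \<in> cl_circ \<Lambda> ` circ_diagrams \<Lambda>" by (metis image_eqI)
  qed
  have "bij_betw (cl_circ \<Lambda>) (circ_diagrams \<Lambda>) (closed_circ_diagrams (clw ` \<Lambda>))"
    unfolding bij_betw_def using inj surj F by blast
  then show ?thesis using F by blast
qed


end
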